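(* Let $(\mathcal C,\amalg)$ be a monoidal supercategory satisfying (C1)–(C4) below, and for a two-sided ideal $J$ of $B_n$ let $\Sigma(J)$ denote the two-sided ideal of $B_{n+1}$ generated by $\iota_{1,n}(1\otimes J)$. Then for every $\lambda\in\Lambda(B_n)$, $$\Sigma(J^\lambda)=\bigoplus_{\mu\in\Lambda(B_{n+1}),\ \lambda\subset\mu}J^\mu.$$ Conditions: (C1) there is a bijection $\mathbb N\to\mathrm{Ob}(\mathcal C)$, $n\mapsto[n]$, with $[n]\amalg[m]=[n+m]$; (C2) $\mathrm{Hom}_{\mathcal C}([n],[m])=0$ for $n\ne m$; (C3) $B_n=\mathrm{End}_{\mathcal C}([n])$ is a finite dimensional semisimple superalgebra; (C4) there is a partial order $\subset$ on $\Lambda(\mathcal C)=\coprod_n\Lambda(B_n)$ such that for every $\lambda\in\Lambda(B_n)$, $[B_1]\cdot[S_\lambda]=\sum_{\mu\in\Lambda(B_{n+1}),\ \lambda\subset\mu}c_{\lambda,\mu}[S_\mu]$ in $\mathrm K(\mathcal C)$ with all $c_{\lambda,\mu}$ positive integers.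
   Context: A supercategory is a category enriched in super vector spaces; a monoidal supercategory has a monoidal product on all morphisms obeying the Koszul sign rule. A finite dimensional superalgebra $B$ is semisimple if the abelian category of $B$-modules with even morphisms is semisimple. $\Lambda(B)$ is the set of isomorphism classes of simple left $B$-modules (odd isomorphisms allowed), $S_\lambda$ a representative, and $J^\lambda\subset B$ the sum of all left ideals of $B$ isomorphic to $S_\lambda$ or its parity shift $S_\lambda[1]$. The maps $\iota_{m,n}\colon B_m\otimes B_n\to B_{m+n}$, $f\otimes g\mapsto f\amalg g$, are superalgebra homomorphisms. $\mathrm K(B)$ is the Grothendieck group of finite length $B$-modules modulo $[M]=[M[1]]$; $\mathrm K(\mathcal C)=\bigoplus_n\mathrm K(B_n)$ with product $[M]\cdot[N]=[B_{m+n}\otimes_{B_m\otimes B_n}(M\otimes N)]$ (induction along $\iota_{m,n}$). *)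

theory Defs
  imports Complex_Main
begin

text \<open>
  A (strict) monoidal supercategory satisfying (C1),(C2): objects are [n], n in nat, with
  [n] amalg [m] = [n+m] and Hom([n],[m]) = 0 for n differing from m.  Such a category is
  encoded by the family of endomorphism superalgebras B_n = End([n]), all living inside one
  ambient k-vector space of type 'a (their direct sum), together with the composition
  (cmp), identities (idn n = 1_[n]), the parity decomposition (ev / od) and the monoidal
  product on morphisms (amg).
\<close>

record ('k, 'a) msc =
  sc  :: "'k \<Rightarrow> 'a \<Rightarrow> 'a"
  ev  :: "'a set"
  od  :: "'a set"
  hom :: "nat \<Rightarrow> 'a set"          \<comment> \<open>hom n = B_n = End([n])\<close>
  cmp :: "'a \<Rightarrow> 'a \<Rightarrow> 'a"
  idn :: "nat \<Rightarrow> 'a"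
  amg :: "'a \<Rightarrow> 'a \<Rightarrow> 'a"

definition homog :: "('k, 'a::ab_group_add, 'z) msc_scheme \<Rightarrow> 'a \<Rightarrow> bool" where
  "homog C x \<longleftrightarrow> x \<in> ev C \<or> x \<in> od C"

definition graded :: "('k, 'a::ab_group_add, 'z) msc_scheme \<Rightarrow> 'a set \<Rightarrow> bool" where
  "graded C X \<longleftrightarrow> (\<forall>x\<in>X. \<exists>a\<in>X \<inter> ev C. \<exists>b\<in>X \<inter> od C. x = a + b)"

definition superalg :: "('k::field, 'a::ab_group_add, 'z) msc_scheme \<Rightarrow> nat \<Rightarrow> bool" where
  "superalg C n \<longleftrightarrow>
     module.subspace (sc C) (hom C n) \<and> graded C (hom C n) \<and>
     idn C n \<in> hom C n \<inter> ev C \<and>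
     (\<forall>x\<in>hom C n. \<forall>y\<in>hom C n. cmp C x y \<in> hom C n) \<and>
     (\<forall>x\<in>hom C n. \<forall>y\<in>hom C n. \<forall>z\<in>hom C n. cmp C (cmp C x y) z = cmp C x (cmp C y z)) \<and>
     (\<forall>x\<in>hom C n. cmp C (idn C n) x = x \<and> cmp C x (idn C n) = x) \<and>
     (\<forall>x\<in>hom C n. \<forall>y\<in>hom C n. \<forall>z\<in>hom C n.
        cmp C (x + y) z = cmp C x z + cmp C y z \<and> cmp C z (x + y) = cmp C z x + cmp C z y) \<and>
     (\<forall>c. \<forall>x\<in>hom C n. \<forall>y\<in>hom C n.
        cmp C (sc C c x) y = sc C c (cmp C x y) \<and> cmp C x (sc C c y) = sc C c (cmp C x y)) \<and>
     (\<forall>x\<in>hom C n. \<forall>y\<in>hom C n.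
        (x \<in> ev C \<and> y \<in> ev C \<longrightarrow> cmp C x y \<in> ev C) \<and>
        (x \<in> ev C \<and> y \<in> od C \<longrightarrow> cmp C x y \<in> od C) \<and>
        (x \<in> od C \<and> y \<in> ev C \<longrightarrow> cmp C x y \<in> od C) \<and>
        (x \<in> od C \<and> y \<in> od C \<longrightarrow> cmp C x y \<in> ev C))"

text \<open>Monoidal supercategory structure (strict), with objects indexed by nat as in (C1),
  Hom([n],[m]) = 0 for n /= m as in (C2) (only the spaces hom n exist).\<close>
definition mon_supercat :: "('k::field, 'a::ab_group_add, 'z) msc_scheme \<Rightarrow> bool" where
  "mon_supercat C \<longleftrightarrow>
     vector_space (sc C) \<and> module.subspace (sc C) (ev C) \<and> module.subspace (sc C) (od C) \<and>
     ev C \<inter> od C = {0} \<and>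
     (\<forall>n. superalg C n) \<and>
     (\<forall>m n. \<forall>f\<in>hom C m. \<forall>g\<in>hom C n.
        amg C f g \<in> hom C (m + n) \<and>
        (f \<in> ev C \<and> g \<in> ev C \<longrightarrow> amg C f g \<in> ev C) \<and>
        (f \<in> ev C \<and> g \<in> od C \<longrightarrow> amg C f g \<in> od C) \<and>
        (f \<in> od C \<and> g \<in> ev C \<longrightarrow> amg C f g \<in> od C) \<and>
        (f \<in> od C \<and> g \<in> od C \<longrightarrow> amg C f g \<in> ev C)) \<and>
     (\<forall>m n. \<forall>f\<in>hom C m. \<forall>f'\<in>hom C m. \<forall>g\<in>hom C n. \<forall>g'\<in>hom C n. \<forall>c.
        amg C (f + f') g = amg C f g + amg C f' g \<and>
        amg C f (g + g') = amg C f g + amg C f g' \<and>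
        amg C (sc C c f) g = sc C c (amg C f g) \<and>
        amg C f (sc C c g) = sc C c (amg C f g)) \<and>
     \<comment> \<open>super interchange law (Koszul sign rule)\<close>
     (\<forall>m n. \<forall>f\<in>hom C m. \<forall>f'\<in>hom C m. \<forall>g\<in>hom C n. \<forall>g'\<in>hom C n.
        homog C g \<and> homog C f' \<longrightarrow>
        cmp C (amg C f g) (amg C f' g') =
          (if g \<in> od C \<and> f' \<in> od C then - amg C (cmp C f f') (cmp C g g')
           else amg C (cmp C f f') (cmp C g g'))) \<and>
     (\<forall>m n. amg C (idn C m) (idn C n) = idn C (m + n)) \<and>
     (\<forall>l m n. \<forall>f\<in>hom C l. \<forall>g\<in>hom C m. \<forall>h\<in>hom C n.
        amg C (amg C f g) h = amg C f (amg C g h)) \<and>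
     (\<forall>n. \<forall>f\<in>hom C n. amg C (idn C 0) f = f \<and> amg C f (idn C 0) = f)"

definition findim :: "('k::field, 'a::ab_group_add, 'z) msc_scheme \<Rightarrow> nat \<Rightarrow> bool" where
  "findim C n \<longleftrightarrow> (\<exists>S. finite S \<and> S \<subseteq> hom C n \<and> module.span (sc C) S = hom C n)"

text \<open>(Graded) left ideals of B_n = sub-supermodules of the regular module.\<close>
definition lideal :: "('k::field, 'a::ab_group_add, 'z) msc_scheme \<Rightarrow> nat \<Rightarrow> 'a set \<Rightarrow> bool" where
  "lideal C n L \<longleftrightarrow> module.subspace (sc C) L \<and> L \<subseteq> hom C n \<and> graded C L \<and>
     (\<forall>b\<in>hom C n. \<forall>x\<in>L. cmp C b x \<in> L)"

text \<open>Semisimplicity (in the category with even morphisms): the regular module is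
  semisimple, i.e. every sub-supermodule of B_n has a complementary sub-supermodule.\<close>
definition semisimple :: "('k::field, 'a::ab_group_add, 'z) msc_scheme \<Rightarrow> nat \<Rightarrow> bool" where
  "semisimple C n \<longleftrightarrow> (\<forall>L. lideal C n L \<longrightarrow>
     (\<exists>L'. lideal C n L' \<and> L \<inter> L' = {0} \<and> hom C n = {x + y | x y. x \<in> L \<and> y \<in> L'}))"

text \<open>Simple left modules, realised as minimal (graded) left ideals.\<close>
definition mlideal :: "('k::field, 'a::ab_group_add, 'z) msc_scheme \<Rightarrow> nat \<Rightarrow> 'a set \<Rightarrow> bool" where
  "mlideal C n L \<longleftrightarrow> lideal C n L \<and> L \<noteq> {0} \<and>
     (\<forall>L'. lideal C n L' \<and> L' \<subseteq> L \<longrightarrow> L' = {0} \<or> L' = L)"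

definition liso :: "('k::field, 'a::ab_group_add, 'z) msc_scheme \<Rightarrow> nat \<Rightarrow> 'a set \<Rightarrow> 'a set \<Rightarrow> bool" where
  "liso C n L L' \<longleftrightarrow> (\<exists>f. bij_betw f L L' \<and>
     (\<forall>x\<in>L. \<forall>y\<in>L. f (x + y) = f x + f y) \<and> (\<forall>c. \<forall>x\<in>L. f (sc C c x) = sc C c (f x)) \<and>
     ((\<forall>x\<in>L \<inter> ev C. f x \<in> ev C) \<and> (\<forall>x\<in>L \<inter> od C. f x \<in> od C) \<and>
        (\<forall>b\<in>hom C n. \<forall>x\<in>L. f (cmp C b x) = cmp C b (f x))
      \<or>
      (\<forall>x\<in>L \<inter> ev C. f x \<in> od C) \<and> (\<forall>x\<in>L \<inter> od C. f x \<in> ev C) \<and>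
        (\<forall>b\<in>hom C n \<inter> ev C. \<forall>x\<in>L. f (cmp C b x) = cmp C b (f x)) \<and>
        (\<forall>b\<in>hom C n \<inter> od C. \<forall>x\<in>L. f (cmp C b x) = - cmp C b (f x))))"

text \<open>Lambda(B_n): isomorphism classes of simple left B_n-modules.\<close>
definition Lam :: "('k::field, 'a::ab_group_add, 'z) msc_scheme \<Rightarrow> nat \<Rightarrow> 'a set set set" where
  "Lam C n = {{L'. mlideal C n L' \<and> liso C n L L'} | L. mlideal C n L}"

definition LamC :: "('k::field, 'a::ab_group_add, 'z) msc_scheme \<Rightarrow> (nat \<times> 'a set set) set" where
  "LamC C = {(n, la). la \<in> Lam C n}"

definition Jlam :: "('k::field, 'a::ab_group_add, 'z) msc_scheme \<Rightarrow> 'a set set \<Rightarrow> 'a set" where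
  "Jlam C la = module.span (sc C) (\<Union>la)"

text \<open>The induced module B_{n+1} (x)_{B_1 (x) B_n} (B_1 (x) S), for S a left ideal of B_n,
  realised as the left ideal of B_{n+1} generated by iota_{1,n}(B_1 (x) S).\<close>
definition Ind :: "('k::field, 'a::ab_group_add, 'z) msc_scheme \<Rightarrow> nat \<Rightarrow> 'a set \<Rightarrow> 'a set" where
  "Ind C n S = module.span (sc C)
     {cmp C x (amg C a s) | x a s. x \<in> hom C (Suc n) \<and> a \<in> hom C 1 \<and> s \<in> S}"

text \<open>The simple class mu occurs (with positive multiplicity) in the B_{m}-module M.\<close>
definition occurs :: "'a set set \<Rightarrow> 'a set \<Rightarrow> bool" where
  "occurs mu M \<longleftrightarrow> (\<exists>L\<in>mu. L \<subseteq> M)"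

definition tideal :: "('k::field, 'a::ab_group_add, 'z) msc_scheme \<Rightarrow> nat \<Rightarrow> 'a set \<Rightarrow> bool" where
  "tideal C n I \<longleftrightarrow> module.subspace (sc C) I \<and> I \<subseteq> hom C n \<and>
     (\<forall>b\<in>hom C n. \<forall>x\<in>I. cmp C b x \<in> I \<and> cmp C x b \<in> I)"

definition Sigma_id :: "('k::field, 'a::ab_group_add, 'z) msc_scheme \<Rightarrow> nat \<Rightarrow> 'a set \<Rightarrow> 'a set" where
  "Sigma_id C n J = \<Inter>{I. tideal C (Suc n) I \<and> (%j. amg C (idn C 1) j) ` J \<subseteq> I}"

end

theory Submission
  imports Defs
begin

locale MSC =
  fixes C :: "('k::field, 'a::ab_group_add) msc"
  assumes mon: "mon_supercat C"
    and C3: "\<forall>m. findim C m \<and> semisimple C m"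

sublocale MSC \<subseteq> vector_space "sc C"
  using mon unfolding mon_supercat_def by (elim conjE)

context MSC
begin

lemma SA: "superalg C m" using mon unfolding mon_supercat_def by (elim conjE) blast

lemma SAu:
  "module.subspace (sc C) (hom C m) \<and> graded C (hom C m) \<and>
     idn C m \<in> hom C m \<inter> ev C \<and>
     (\<forall>x\<in>hom C m. \<forall>y\<in>hom C m. cmp C x y \<in> hom C m) \<and>
     (\<forall>x\<in>hom C m. \<forall>y\<in>hom C m. \<forall>z\<in>hom C m. cmp C (cmp C x y) z = cmp C x (cmp C y z)) \<and>
     (\<forall>x\<in>hom C m. cmp C (idn C m) x = x \<and> cmp C x (idn C m) = x) \<and>
     (\<forall>x\<in>hom C m. \<forall>y\<in>hom C m. \<forall>z\<in>hom C m.
        cmp C (x + y) z = cmp C x z + cmp C y z \<and> cmp C z (x + y) = cmp C z x + cmp C z y) \<and>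
     (\<forall>c. \<forall>x\<in>hom C m. \<forall>y\<in>hom C m.
        cmp C (sc C c x) y = sc C c (cmp C x y) \<and> cmp C x (sc C c y) = sc C c (cmp C x y)) \<and>
     (\<forall>x\<in>hom C m. \<forall>y\<in>hom C m.
        (x \<in> ev C \<and> y \<in> ev C \<longrightarrow> cmp C x y \<in> ev C) \<and>
        (x \<in> ev C \<and> y \<in> od C \<longrightarrow> cmp C x y \<in> od C) \<and>
        (x \<in> od C \<and> y \<in> ev C \<longrightarrow> cmp C x y \<in> od C) \<and>
        (x \<in> od C \<and> y \<in> od C \<longrightarrow> cmp C x y \<in> ev C))"
  using SA[of m] unfolding superalg_def by assumption

lemma hom_sub: "subspace (hom C m)" using SAu[of m] by (elim conjE)
lemma hom_graded: "graded C (hom C m)" using SAu[of m] by (elim conjE)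
lemma idn_hom: "idn C m \<in> hom C m" using SAu[of m] by (elim conjE IntE)
lemma idn_ev: "idn C m \<in> ev C" using SAu[of m] by (elim conjE IntE)
lemma cmp_hom: "x \<in> hom C m \<Longrightarrow> y \<in> hom C m \<Longrightarrow> cmp C x y \<in> hom C m"
  using SAu[of m] by (elim conjE) blast
lemma assoc: "x \<in> hom C m \<Longrightarrow> y \<in> hom C m \<Longrightarrow> z \<in> hom C m \<Longrightarrow>
   cmp C (cmp C x y) z = cmp C x (cmp C y z)"
  using SAu[of m] by (elim conjE) blast
lemma idl: "x \<in> hom C m \<Longrightarrow> cmp C (idn C m) x = x"
  using SAu[of m] by (elim conjE) blast
lemma idr: "x \<in> hom C m \<Longrightarrow> cmp C x (idn C m) = x"
  using SAu[of m] by (elim conjE) blast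
lemma distl: "x \<in> hom C m \<Longrightarrow> y \<in> hom C m \<Longrightarrow> z \<in> hom C m \<Longrightarrow>
   cmp C z (x + y) = cmp C z x + cmp C z y"
  using SAu[of m] by (elim conjE) blast
lemma distr: "x \<in> hom C m \<Longrightarrow> y \<in> hom C m \<Longrightarrow> z \<in> hom C m \<Longrightarrow>
   cmp C (x + y) z = cmp C x z + cmp C y z"
  using SAu[of m] by (elim conjE) blast
lemma scl: "x \<in> hom C m \<Longrightarrow> y \<in> hom C m \<Longrightarrow> cmp C (sc C c x) y = sc C c (cmp C x y)"
  using SAu[of m] by (elim conjE) blast
lemma scr: "x \<in> hom C m \<Longrightarrow> y \<in> hom C m \<Longrightarrow> cmp C x (sc C c y) = sc C c (cmp C x y)"
  using SAu[of m] by (elim conjE) blast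
lemma par_ee: "x \<in> hom C m \<Longrightarrow> y \<in> hom C m \<Longrightarrow> x \<in> ev C \<Longrightarrow> y \<in> ev C \<Longrightarrow> cmp C x y \<in> ev C"
  using SAu[of m] by (elim conjE) blast
lemma par_eo: "x \<in> hom C m \<Longrightarrow> y \<in> hom C m \<Longrightarrow> x \<in> ev C \<Longrightarrow> y \<in> od C \<Longrightarrow> cmp C x y \<in> od C"
  using SAu[of m] by (elim conjE) blast
lemma par_oe: "x \<in> hom C m \<Longrightarrow> y \<in> hom C m \<Longrightarrow> x \<in> od C \<Longrightarrow> y \<in> ev C \<Longrightarrow> cmp C x y \<in> od C"
  using SAu[of m] by (elim conjE) blast
lemma par_oo: "x \<in> hom C m \<Longrightarrow> y \<in> hom C m \<Longrightarrow> x \<in> od C \<Longrightarrow> y \<in> od C \<Longrightarrow> cmp C x y \<in> ev C"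
  using SAu[of m] by (elim conjE) blast

lemma ev_sub: "subspace (ev C)" using mon unfolding mon_supercat_def by (elim conjE)
lemma od_sub: "subspace (od C)" using mon unfolding mon_supercat_def by (elim conjE)
lemma evod: "ev C \<inter> od C = {0}" using mon unfolding mon_supercat_def by (elim conjE)

lemma zero_hom: "0 \<in> hom C m" using hom_sub subspace_0 by blast
lemma zero_ev: "0 \<in> ev C" using ev_sub subspace_0 by blast
lemma zero_od: "0 \<in> od C" using od_sub subspace_0 by blast

lemma cmp_0r: "x \<in> hom C m \<Longrightarrow> cmp C x 0 = 0"
  using distl[of 0 m 0 x] zero_hom by simp
lemma cmp_0l: "x \<in> hom C m \<Longrightarrow> cmp C 0 x = 0"
  using distr[of 0 m 0 x] zero_hom by simp
lemma cmp_negr: "x \<in> hom C m \<Longrightarrow> y \<in> hom C m \<Longrightarrow> cmp C x (- y) = - cmp C x y"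
  using distl[of y m "-y" x] subspace_neg[OF hom_sub] cmp_0r[of x m]
  by (simp add: eq_neg_iff_add_eq_0 add.commute)
lemma cmp_negl: "x \<in> hom C m \<Longrightarrow> y \<in> hom C m \<Longrightarrow> cmp C (- x) y = - cmp C x y"
  using distr[of x m "-x" y] subspace_neg[OF hom_sub] cmp_0l[of y m]
  by (simp add: eq_neg_iff_add_eq_0 add.commute)
lemma cmp_diffr: "x \<in> hom C m \<Longrightarrow> y \<in> hom C m \<Longrightarrow> z \<in> hom C m \<Longrightarrow>
   cmp C z (x - y) = cmp C z x - cmp C z y"
proof -
  assume a: "x \<in> hom C m" "y \<in> hom C m" "z \<in> hom C m"
  have n: "- y \<in> hom C m" using a subspace_neg[OF hom_sub] by blast
  have "cmp C z (x - y) = cmp C z (x + - y)" by simp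
  also have "\<dots> = cmp C z x + cmp C z (- y)" using distl[OF a(1) n a(3)] .
  also have "\<dots> = cmp C z x - cmp C z y" using cmp_negr[OF a(3) a(2)] by simp
  finally show ?thesis .
qed
lemma cmp_diffl: "x \<in> hom C m \<Longrightarrow> y \<in> hom C m \<Longrightarrow> z \<in> hom C m \<Longrightarrow>
   cmp C (x - y) z = cmp C x z - cmp C y z"
proof -
  assume a: "x \<in> hom C m" "y \<in> hom C m" "z \<in> hom C m"
  have n: "- y \<in> hom C m" using a subspace_neg[OF hom_sub] by blast
  have "cmp C (x - y) z = cmp C (x + - y) z" by simp
  also have "\<dots> = cmp C x z + cmp C (- y) z" using distr[OF a(1) n a(3)] .
  also have "\<dots> = cmp C x z - cmp C y z" using cmp_negl[OF a(2) a(3)] by simp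
  finally show ?thesis .
qed

lemma decomp_unique:
  assumes "a \<in> ev C" "a' \<in> ev C" "b \<in> od C" "b' \<in> od C" "a + b = a' + b'"
  shows "a = a' \<and> b = b'"
proof -
  have "a - a' = b' - b" using assms(5) by (simp add: algebra_simps)
  moreover have "a - a' \<in> ev C" using assms subspace_diff[OF ev_sub] by blast
  moreover have "b' - b \<in> od C" using assms subspace_diff[OF od_sub] by blast
  ultimately have "a - a' \<in> ev C \<inter> od C" by (metis IntI)
  then have "a - a' = 0" using evod by blast
  then have "a = a'" by simp
  then show ?thesis using assms(5) by simp
qed

lemma graded_parts:
  assumes "graded C K" "z \<in> K" "z = u + v" "u \<in> ev C" "v \<in> od C"
  shows "u \<in> K \<and> v \<in> K"
proof -
  obtain a b where "a \<in> K" "a \<in> ev C" "b \<in> K" "b \<in> od C" "z = a + b"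
    using assms(1,2) unfolding graded_def by blast
  note ab = this
  have "u + v = a + b" using ab(5) assms(2,3) by simp
  then have "u = a \<and> v = b" using decomp_unique[of u a v b] ab assms(4,5) by blast
  then show ?thesis using ab by blast
qed

lemma M_amg:
  "\<forall>m n. \<forall>f\<in>hom C m. \<forall>g\<in>hom C n.
        amg C f g \<in> hom C (m + n) \<and>
        (f \<in> ev C \<and> g \<in> ev C \<longrightarrow> amg C f g \<in> ev C) \<and>
        (f \<in> ev C \<and> g \<in> od C \<longrightarrow> amg C f g \<in> od C) \<and>
        (f \<in> od C \<and> g \<in> ev C \<longrightarrow> amg C f g \<in> od C) \<and>
        (f \<in> od C \<and> g \<in> od C \<longrightarrow> amg C f g \<in> ev C)"
  using mon[unfolded mon_supercat_def] by (elim conjE) assumption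
lemma M_lin:
  "\<forall>m n. \<forall>f\<in>hom C m. \<forall>f'\<in>hom C m. \<forall>g\<in>hom C n. \<forall>g'\<in>hom C n. \<forall>c.
        amg C (f + f') g = amg C f g + amg C f' g \<and>
        amg C f (g + g') = amg C f g + amg C f g' \<and>
        amg C (sc C c f) g = sc C c (amg C f g) \<and>
        amg C f (sc C c g) = sc C c (amg C f g)"
  using mon[unfolded mon_supercat_def] by (elim conjE) assumption
lemma M_int:
  "\<forall>m n. \<forall>f\<in>hom C m. \<forall>f'\<in>hom C m. \<forall>g\<in>hom C n. \<forall>g'\<in>hom C n.
        homog C g \<and> homog C f' \<longrightarrow>
        cmp C (amg C f g) (amg C f' g') =
          (if g \<in> od C \<and> f' \<in> od C then - amg C (cmp C f f') (cmp C g g')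
           else amg C (cmp C f f') (cmp C g g'))"
  using mon[unfolded mon_supercat_def] by (elim conjE) assumption

lemma amg_hom: "f \<in> hom C p \<Longrightarrow> g \<in> hom C q \<Longrightarrow> amg C f g \<in> hom C (p + q)"
  using M_amg by blast
lemma amg_par:
  "f \<in> hom C p \<Longrightarrow> g \<in> hom C q \<Longrightarrow>
        (f \<in> ev C \<and> g \<in> ev C \<longrightarrow> amg C f g \<in> ev C) \<and>
        (f \<in> ev C \<and> g \<in> od C \<longrightarrow> amg C f g \<in> od C) \<and>
        (f \<in> od C \<and> g \<in> ev C \<longrightarrow> amg C f g \<in> od C) \<and>
        (f \<in> od C \<and> g \<in> od C \<longrightarrow> amg C f g \<in> ev C)"
  using M_amg by blast
lemma amg_addl: "f \<in> hom C p \<Longrightarrow> f' \<in> hom C p \<Longrightarrow> g \<in> hom C q \<Longrightarrow>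
   amg C (f + f') g = amg C f g + amg C f' g"
  using M_lin by blast
lemma amg_addr: "f \<in> hom C p \<Longrightarrow> g \<in> hom C q \<Longrightarrow> g' \<in> hom C q \<Longrightarrow>
   amg C f (g + g') = amg C f g + amg C f g'"
  using M_lin by blast
lemma amg_scr: "f \<in> hom C p \<Longrightarrow> g \<in> hom C q \<Longrightarrow>
   amg C f (sc C c g) = sc C c (amg C f g)"
  using M_lin by blast
lemma amg_0r: "f \<in> hom C p \<Longrightarrow> amg C f 0 = (0::'a)"
  using amg_addr[of f p 0 q 0] zero_hom[of q] by simp

lemma interchange_id:
  assumes "a \<in> hom C 1" "s \<in> hom C q"
  shows "amg C a s = cmp C (amg C a (idn C q)) (amg C (idn C 1) s)"
proof -
  have "homog C (idn C q)" "homog C (idn C 1)" using idn_ev unfolding homog_def by auto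
  then have E: "cmp C (amg C a (idn C q)) (amg C (idn C 1) s) =
     (if idn C q \<in> od C \<and> idn C 1 \<in> od C then - amg C (cmp C a (idn C 1)) (cmp C (idn C q) s)
      else amg C (cmp C a (idn C 1)) (cmp C (idn C q) s))"
    using M_int assms idn_hom by blast
  have cs: "cmp C (idn C q) s = s" "cmp C a (idn C 1) = a" using idl idr assms by auto
  show ?thesis
  proof (cases "idn C q \<in> od C")
    case True
    then have "idn C q = 0" using idn_ev[of q] evod by blast
    then have "s = 0" using cs cmp_0l assms by metis
    then show ?thesis using E cs amg_0r[OF assms(1)] by simp
  next
    case False
    then show ?thesis using E cs by simp
  qed
qed


lemma lidealD:
  assumes "lideal C m L"
  shows "subspace L" "L \<subseteq> hom C m" "graded C L" "\<And>b x. b \<in> hom C m \<Longrightarrow> x \<in> L \<Longrightarrow> cmp C b x \<in> L"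
  using assms unfolding lideal_def by blast+

lemma gradedD:
  assumes "graded C L" "x \<in> L"
  obtains a b where "a \<in> L" "a \<in> ev C" "b \<in> L" "b \<in> od C" "x = a + b"
  using assms unfolding graded_def by blast

lemma graded_span:
  assumes "\<forall>x\<in>X. \<exists>a\<in>span X \<inter> ev C. \<exists>b\<in>span X \<inter> od C. x = a + b"
  shows "graded C (span X)"
  unfolding graded_def
proof
  fix y assume "y \<in> span X"
  then show "\<exists>a\<in>span X \<inter> ev C. \<exists>b\<in>span X \<inter> od C. y = a + b"
  proof (induction rule: span_induct_alt)
    case base
    show ?case using span_zero zero_ev zero_od by force
  next
    case (step c x y)
    obtain a b where ab: "a \<in> span X" "a \<in> ev C" "b \<in> span X" "b \<in> od C" "y = a + b"
      using step.IH by blast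
    obtain a' b' where ab': "a' \<in> span X" "a' \<in> ev C" "b' \<in> span X" "b' \<in> od C" "x = a' + b'"
      using assms step.hyps by blast
    have "sc C c x + y = (sc C c a' + a) + (sc C c b' + b)"
      using ab ab' by (simp add: scale_right_distrib algebra_simps)
    moreover have "sc C c a' + a \<in> span X \<inter> ev C"
      using ab ab' span_add span_scale subspace_add[OF ev_sub] subspace_scale[OF ev_sub] by blast
    moreover have "sc C c b' + b \<in> span X \<inter> od C"
      using ab ab' span_add span_scale subspace_add[OF od_sub] subspace_scale[OF od_sub] by blast
    ultimately show ?case by blast
  qed
qed

lemma graded_span_homog:
  assumes "\<forall>x\<in>X. x \<in> ev C \<or> x \<in> od C"
  shows "graded C (span X)"
proof (rule graded_span, intro ballI)
  fix x assume x: "x \<in> X"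
  then have xs: "x \<in> span X" using span_base by blast
  show "\<exists>a\<in>span X \<inter> ev C. \<exists>b\<in>span X \<inter> od C. x = a + b"
  proof (cases "x \<in> ev C")
    case True
    then show ?thesis using xs span_zero zero_od by force
  next
    case False
    then have "x \<in> od C" using assms x by blast
    then show ?thesis using xs span_zero zero_ev by force
  qed
qed

lemma span_lmul:
  assumes "X \<subseteq> hom C m" "b \<in> hom C m" "\<forall>x\<in>X. cmp C b x \<in> T" "subspace T" "y \<in> span X"
  shows "cmp C b y \<in> T"
proof -
  have "y \<in> hom C m \<and> cmp C b y \<in> T"
    using assms(5)
  proof (induction rule: span_induct_alt)
    case base
    then show ?case using zero_hom cmp_0r[OF assms(2)] subspace_0[OF assms(4)] by simp
  next
    case (step c x y)
    have xh: "x \<in> hom C m" using step assms(1) by blast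
    have cx: "sc C c x \<in> hom C m" using xh subspace_scale[OF hom_sub] by blast
    have "cmp C b (sc C c x + y) = sc C c (cmp C b x) + cmp C b y"
      using distl[OF cx _ assms(2)] step.IH scr[OF assms(2) xh] by simp
    moreover have "sc C c (cmp C b x) + cmp C b y \<in> T"
      using step assms(3,4) subspace_add subspace_scale by blast
    moreover have "sc C c x + y \<in> hom C m" using cx step.IH subspace_add[OF hom_sub] by blast
    ultimately show ?case by simp
  qed
  then show ?thesis by blast
qed

lemma span_rmul:
  assumes "X \<subseteq> hom C m" "b \<in> hom C m" "\<forall>x\<in>X. cmp C x b \<in> T" "subspace T" "y \<in> span X"
  shows "cmp C y b \<in> T"
proof -
  have "y \<in> hom C m \<and> cmp C y b \<in> T"
    using assms(5)
  proof (induction rule: span_induct_alt)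
    case base
    then show ?case using zero_hom cmp_0l[OF assms(2)] subspace_0[OF assms(4)] by simp
  next
    case (step c x y)
    have xh: "x \<in> hom C m" using step assms(1) by blast
    have cx: "sc C c x \<in> hom C m" using xh subspace_scale[OF hom_sub] by blast
    have "cmp C (sc C c x + y) b = sc C c (cmp C x b) + cmp C y b"
      using distr[OF cx _ assms(2)] step.IH scl[OF xh assms(2)] by simp
    moreover have "sc C c (cmp C x b) + cmp C y b \<in> T"
      using step assms(3,4) subspace_add subspace_scale by blast
    moreover have "sc C c x + y \<in> hom C m" using cx step.IH subspace_add[OF hom_sub] by blast
    ultimately show ?case by simp
  qed
  then show ?thesis by blast
qed

lemma span_amg:
  assumes "X \<subseteq> hom C q" "f \<in> hom C p" "\<forall>x\<in>X. amg C f x \<in> T" "subspace T" "y \<in> span X"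
  shows "amg C f y \<in> T"
proof -
  have "y \<in> hom C q \<and> amg C f y \<in> T"
    using assms(5)
  proof (induction rule: span_induct_alt)
    case base
    then show ?case using zero_hom amg_0r[OF assms(2)] subspace_0[OF assms(4)] by simp
  next
    case (step c x y)
    have xh: "x \<in> hom C q" using step assms(1) by blast
    have cx: "sc C c x \<in> hom C q" using xh subspace_scale[OF hom_sub] by blast
    have "amg C f (sc C c x + y) = sc C c (amg C f x) + amg C f y"
      using amg_addr[OF assms(2) cx] step.IH amg_scr[OF assms(2) xh] by simp
    moreover have "sc C c (amg C f x) + amg C f y \<in> T"
      using step assms(3,4) subspace_add subspace_scale by blast
    moreover have "sc C c x + y \<in> hom C q" using cx step.IH subspace_add[OF hom_sub] by blast
    ultimately show ?case by simp
  qed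
  then show ?thesis by blast
qed

lemma span_hom: "X \<subseteq> hom C m \<Longrightarrow> span X \<subseteq> hom C m"
  using span_minimal hom_sub by blast

lemma lideal_span_Union:
  assumes "\<forall>L\<in>F. lideal C m L"
  shows "lideal C m (span (\<Union>F))"
proof -
  have U: "\<Union>F \<subseteq> hom C m" using assms lidealD(2) by blast
  have g: "graded C (span (\<Union>F))"
  proof (rule graded_span, intro ballI)
    fix x assume "x \<in> \<Union>F"
    then obtain L where L: "L \<in> F" "x \<in> L" by blast
    then obtain a b where "a \<in> L" "a \<in> ev C" "b \<in> L" "b \<in> od C" "x = a + b"
      using lidealD(3)[of m L] assms gradedD by metis
    then show "\<exists>a\<in>span (\<Union>F) \<inter> ev C. \<exists>b\<in>span (\<Union>F) \<inter> od C. x = a + b"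
      using L span_base by blast
  qed
  have l: "\<forall>b\<in>hom C m. \<forall>x\<in>span (\<Union>F). cmp C b x \<in> span (\<Union>F)"
  proof (intro ballI)
    fix b x assume b: "b \<in> hom C m" and x: "x \<in> span (\<Union>F)"
    have "\<forall>y\<in>\<Union>F. cmp C b y \<in> span (\<Union>F)"
    proof
      fix y assume "y \<in> \<Union>F"
      then obtain L where "L \<in> F" "y \<in> L" by blast
      then have "cmp C b y \<in> \<Union>F" using lidealD(4)[of m L b y] assms b by blast
      then show "cmp C b y \<in> span (\<Union>F)" using span_base by blast
    qed
    then show "cmp C b x \<in> span (\<Union>F)" using span_lmul[OF U b _ subspace_span x] by blast
  qed
  show ?thesis unfolding lideal_def using g l span_hom[OF U] by blast
qed

lemma graded_inter: "graded C A \<Longrightarrow> graded C B \<Longrightarrow> graded C (A \<inter> B)"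
  unfolding graded_def using graded_parts[of B] graded_def by (metis IntE IntI)

lemma lideal_inter: "lideal C m A \<Longrightarrow> lideal C m B \<Longrightarrow> lideal C m (A \<inter> B)"
  unfolding lideal_def using graded_inter subspace_inter by blast

lemma dim_less:
  assumes "subspace K'" "subspace K" "K' \<subset> K" "K \<subseteq> span W" "finite W"
  shows "dim K' < dim K"
proof -
  obtain B' where B': "B' \<subseteq> K'" "independent B'" "K' \<subseteq> span B'"
    by (rule maximal_independent_subset)
  have "B' \<subseteq> K" using B' assms(3) by blast
  then obtain B where B: "B' \<subseteq> B" "B \<subseteq> K" "independent B" "K \<subseteq> span B"
    using maximal_independent_subset_extend B'(2) by metis
  have fin: "finite B" using independent_span_bound[OF assms(5) B(3)] B(2) assms(4) by blast
  have c1: "card B' = dim K'" using basis_card_eq_dim B' by blast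
  have c2: "card B = dim K" using basis_card_eq_dim B(2-4) by blast
  have "B' \<noteq> B"
  proof
    assume "B' = B"
    then have "K \<subseteq> span B'" using B by simp
    also have "span B' \<subseteq> K'" using span_minimal B'(1) assms(1) by blast
    finally show False using assms(3) by blast
  qed
  then have "B' \<subset> B" using B(1) by blast
  then have "card B' < card B" using fin psubset_card_mono by blast
  then show ?thesis using c1 c2 by simp
qed

lemma ex_mlideal:
  assumes "lideal C m K" "K \<noteq> {0}"
  shows "\<exists>L. mlideal C m L \<and> L \<subseteq> K"
proof -
  obtain W where W: "finite W" "W \<subseteq> hom C m" "span W = hom C m"
    using C3 unfolding findim_def by blast
  show ?thesis using assms
  proof (induction "dim K" arbitrary: K rule: less_induct)
    case less
    show ?case
    proof (cases "mlideal C m K")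
      case True
      then show ?thesis by blast
    next
      case False
      then obtain K' where K': "lideal C m K'" "K' \<subseteq> K" "K' \<noteq> {0}" "K' \<noteq> K"
        using less.prems unfolding mlideal_def by blast
      have "dim K' < dim K"
        using dim_less[of K' K W] K' less.prems W lidealD(1,2) by blast
      then show ?thesis using less.hyps[of K'] K' by blast
    qed
  qed
qed

lemma complement:
  assumes "lideal C m L"
  obtains L' where "lideal C m L'" "L \<inter> L' = {0}" "hom C m = {x + y | x y. x \<in> L \<and> y \<in> L'}"
proof -
  have "semisimple C m" using C3 by blast
  then have "\<forall>L. lideal C m L \<longrightarrow> (\<exists>L'. lideal C m L' \<and> L \<inter> L' = {0} \<and> hom C m = {x + y | x y. x \<in> L \<and> y \<in> L'})"
    unfolding semisimple_def .
  then have "\<exists>L'. lideal C m L' \<and> L \<inter> L' = {0} \<and> hom C m = {x + y | x y. x \<in> L \<and> y \<in> L'}"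
    using assms by blast
  then show ?thesis using that by blast
qed

lemma decomp:
  assumes I: "lideal C m I"
  shows "I \<subseteq> span (\<Union>{L. mlideal C m L \<and> L \<subseteq> I})"
proof -
  define M where "M = span (\<Union>{L. mlideal C m L \<and> L \<subseteq> I})"
  have lM: "lideal C m M" unfolding M_def
    by (rule lideal_span_Union) (simp add: mlideal_def)
  have MI: "M \<subseteq> I" unfolding M_def by (rule span_minimal[OF _ lidealD(1)[OF I]]) blast
  obtain L'' where L'': "lideal C m L''" "M \<inter> L'' = {0}" "hom C m = {x + y | x y. x \<in> M \<and> y \<in> L''}"
    using complement[OF lM] by blast
  have K: "lideal C m (L'' \<inter> I)" using lideal_inter L''(1) I by blast
  have K0: "L'' \<inter> I = {0}"
  proof (rule ccontr)
    assume "L'' \<inter> I \<noteq> {0}"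
    then obtain L where L: "mlideal C m L" "L \<subseteq> L'' \<inter> I" using ex_mlideal K by blast
    then have "L \<subseteq> \<Union>{L. mlideal C m L \<and> L \<subseteq> I}" by blast
    then have "L \<subseteq> M" unfolding M_def using span_superset by (rule subset_trans)
    then have "L \<subseteq> {0}" using L L''(2) by blast
    moreover have "0 \<in> L" using subspace_0[OF lidealD(1)] L(1) unfolding mlideal_def by blast
    ultimately show False using L(1) unfolding mlideal_def by blast
  qed
  show ?thesis
  proof
    fix x assume x: "x \<in> I"
    then have "x \<in> hom C m" using lidealD(2)[OF I] by blast
    then obtain u v where uv: "u \<in> M" "v \<in> L''" "x = u + v" using L''(3) by blast
    have "v = x - u" using uv by simp
    then have "v \<in> I" using x uv(1) MI subspace_diff[OF lidealD(1)[OF I]] by blast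
    then have "v = 0" using K0 uv(2) by blast
    then show "x \<in> span (\<Union>{L. mlideal C m L \<and> L \<subseteq> I})" using uv M_def by simp
  qed
qed


lemma tidealD:
  assumes "tideal C m T"
  shows "subspace T" "T \<subseteq> hom C m" "\<And>b x. b \<in> hom C m \<Longrightarrow> x \<in> T \<Longrightarrow> cmp C b x \<in> T"
    "\<And>b x. b \<in> hom C m \<Longrightarrow> x \<in> T \<Longrightarrow> cmp C x b \<in> T"
  using assms unfolding tideal_def by blast+

lemma add_0:
  fixes f :: "'a \<Rightarrow> 'a"
  assumes "subspace L" "\<forall>x\<in>L. \<forall>y\<in>L. f (x + y) = f x + f y"
  shows "f 0 = 0"
proof -
  have "f (0 + 0) = f 0 + f 0" using assms subspace_0 by blast
  then show ?thesis by simp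
qed

lemma add_neg:
  fixes f :: "'a \<Rightarrow> 'a"
  assumes "subspace L" "\<forall>x\<in>L. \<forall>y\<in>L. f (x + y) = f x + f y" "x \<in> L"
  shows "f (- x) = - f x"
proof -
  have "-x \<in> L" using assms subspace_neg by blast
  then have "f (x + - x) = f x + f (- x)" using assms by blast
  then have "f x + f (- x) = 0" using add_0[OF assms(1,2)] by simp
  then show ?thesis by (simp add: eq_neg_iff_add_eq_0 add.commute)
qed

lemma lisoE:
  assumes "liso C m L X"
  obtains f where "bij_betw f L X" "\<forall>x\<in>L. \<forall>y\<in>L. f (x + y) = f x + f y"
    "\<forall>c. \<forall>x\<in>L. f (sc C c x) = sc C c (f x)"
    "((\<forall>x\<in>L \<inter> ev C. f x \<in> ev C) \<and> (\<forall>x\<in>L \<inter> od C. f x \<in> od C) \<and>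
        (\<forall>b\<in>hom C m. \<forall>x\<in>L. f (cmp C b x) = cmp C b (f x)))
      \<or>
      ((\<forall>x\<in>L \<inter> ev C. f x \<in> od C) \<and> (\<forall>x\<in>L \<inter> od C. f x \<in> ev C) \<and>
        (\<forall>b\<in>hom C m \<inter> ev C. \<forall>x\<in>L. f (cmp C b x) = cmp C b (f x)) \<and>
        (\<forall>b\<in>hom C m \<inter> od C. \<forall>x\<in>L. f (cmp C b x) = - cmp C b (f x)))"
  using assms unfolding liso_def by blast

lemma liso_refl: "liso C m L L"
  unfolding liso_def
  by (rule exI[of _ id]) (simp add: bij_betw_id)

lemma absorb:
  assumes L: "lideal C m L" and iso: "liso C m L X" and Xh: "X \<subseteq> hom C m"
    and T: "tideal C m T" and LT: "L \<subseteq> T"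
  shows "X \<subseteq> T"
proof -
  obtain L'' where L'': "lideal C m L''" "L \<inter> L'' = {0}" "hom C m = {x + y | x y. x \<in> L \<and> y \<in> L''}"
    using complement[OF L] by blast
  obtain e e'' where ee: "e \<in> L" "e'' \<in> L''" "idn C m = e + e''"
    using idn_hom[of m] L''(3) by blast
  have eh: "e \<in> hom C m" "e'' \<in> hom C m" using ee lidealD(2) L L''(1) by blast+
  have xe: "cmp C x e = x" if x: "x \<in> L" for x
  proof -
    have xh: "x \<in> hom C m" using x lidealD(2)[OF L] by blast
    have eq: "x = cmp C x e + cmp C x e''"
      using idr[OF xh] distl[OF eh xh] ee(3) by simp
    have "cmp C x e \<in> L" using lidealD(4)[OF L xh ee(1)] .
    moreover have "cmp C x e'' \<in> L''" using lidealD(4)[OF L''(1) xh ee(2)] .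
    moreover have "cmp C x e'' = x - cmp C x e" using eq by (simp add: algebra_simps)
    ultimately have "cmp C x e'' \<in> L \<inter> L''" using subspace_diff[OF lidealD(1)[OF L] x] by simp
    then have "cmp C x e'' = 0" using L''(2) by blast
    then show ?thesis using eq by simp
  qed
  obtain f where f: "bij_betw f L X" "\<forall>x\<in>L. \<forall>y\<in>L. f (x + y) = f x + f y"
    "\<forall>c. \<forall>x\<in>L. f (sc C c x) = sc C c (f x)"
    "((\<forall>x\<in>L \<inter> ev C. f x \<in> ev C) \<and> (\<forall>x\<in>L \<inter> od C. f x \<in> od C) \<and>
        (\<forall>b\<in>hom C m. \<forall>x\<in>L. f (cmp C b x) = cmp C b (f x)))
      \<or>
      ((\<forall>x\<in>L \<inter> ev C. f x \<in> od C) \<and> (\<forall>x\<in>L \<inter> od C. f x \<in> ev C) \<and>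
        (\<forall>b\<in>hom C m \<inter> ev C. \<forall>x\<in>L. f (cmp C b x) = cmp C b (f x)) \<and>
        (\<forall>b\<in>hom C m \<inter> od C. \<forall>x\<in>L. f (cmp C b x) = - cmp C b (f x)))"
    by (rule lisoE[OF iso])
  have uX: "f e \<in> X" by (rule bij_betw_apply[OF f(1) ee(1)])
  then have uh: "f e \<in> hom C m" using Xh by blast
  have hc: "f x \<in> T" if x: "x \<in> L" and xp: "x \<in> ev C \<or> x \<in> od C" for x
  proof -
    have xh: "x \<in> hom C m" using x lidealD(2)[OF L] by blast
    have xT: "x \<in> T" using x LT by blast
    have c1: "cmp C x (f e) \<in> T" using tidealD(4)[OF T uh xT] .
    have c2: "- cmp C x (f e) \<in> T" using c1 subspace_neg[OF tidealD(1)[OF T]] by blast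
    have "f x = f (cmp C x e)" using xe[OF x] by simp
    moreover have "f (cmp C x e) = cmp C x (f e) \<or> f (cmp C x e) = - cmp C x (f e)"
      using f(4) xp xh ee(1) by blast
    ultimately show ?thesis using c1 c2 by auto
  qed
  show ?thesis
  proof
    fix y assume "y \<in> X"
    then have "y \<in> f ` L" using bij_betw_imp_surj_on[OF f(1)] by simp
    then obtain x where x: "x \<in> L" "y = f x" by blast
    obtain a b where ab: "a \<in> L" "a \<in> ev C" "b \<in> L" "b \<in> od C" "x = a + b"
      using gradedD[OF lidealD(3)[OF L] x(1)] by metis
    have "y = f a + f b" using x ab f(2) by simp
    then show "y \<in> T" using hc ab subspace_add[OF tidealD(1)[OF T]] by metis
  qed
qed

lemma parity_refl:
  assumes L: "lideal C m L" and inj: "inj_on f L" and add: "\<forall>x\<in>L. \<forall>y\<in>L. f (x + y) = f x + f y"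
    and x: "x \<in> L"
  shows "(\<forall>z\<in>L \<inter> ev C. f z \<in> ev C) \<and> (\<forall>z\<in>L \<inter> od C. f z \<in> od C) \<Longrightarrow>
           (f x \<in> ev C \<longrightarrow> x \<in> ev C) \<and> (f x \<in> od C \<longrightarrow> x \<in> od C)"
    and "(\<forall>z\<in>L \<inter> ev C. f z \<in> od C) \<and> (\<forall>z\<in>L \<inter> od C. f z \<in> ev C) \<Longrightarrow>
           (f x \<in> ev C \<longrightarrow> x \<in> od C) \<and> (f x \<in> od C \<longrightarrow> x \<in> ev C)"
proof -
  have sL: "subspace L" using lidealD(1)[OF L] .
  have f0: "f 0 = 0" using add_0[OF sL add] .
  have zL: "0 \<in> L" using subspace_0[OF sL] .
  obtain a c where ac: "a \<in> L" "a \<in> ev C" "c \<in> L" "c \<in> od C" "x = a + c"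
    using gradedD[OF lidealD(3)[OF L] x] by metis
  have fx: "f x = f a + f c" using ac add by simp
  have kill: "z = 0" if "z \<in> L" "f z = 0" for z
    using inj that zL f0 unfolding inj_on_def by metis
  show "(\<forall>z\<in>L \<inter> ev C. f z \<in> ev C) \<and> (\<forall>z\<in>L \<inter> od C. f z \<in> od C) \<Longrightarrow>
           (f x \<in> ev C \<longrightarrow> x \<in> ev C) \<and> (f x \<in> od C \<longrightarrow> x \<in> od C)"
  proof -
    assume h: "(\<forall>z\<in>L \<inter> ev C. f z \<in> ev C) \<and> (\<forall>z\<in>L \<inter> od C. f z \<in> od C)"
    have p: "f a \<in> ev C" "f c \<in> od C" using h ac by blast+
    have 1: "f x \<in> ev C \<longrightarrow> x \<in> ev C"
    proof
      assume e: "f x \<in> ev C"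
      have "f x + 0 = f a + f c" using fx by simp
      then have "f c = 0" using decomp_unique[OF e p(1) zero_od p(2)] by simp
      then have "c = 0" using kill ac by blast
      then show "x \<in> ev C" using ac by simp
    qed
    have 2: "f x \<in> od C \<longrightarrow> x \<in> od C"
    proof
      assume e: "f x \<in> od C"
      have "0 + f x = f a + f c" using fx by simp
      then have "f a = 0" using decomp_unique[OF zero_ev p(1) e p(2)] by simp
      then have "a = 0" using kill ac by blast
      then show "x \<in> od C" using ac by simp
    qed
    show ?thesis using 1 2 by blast
  qed
  show "(\<forall>z\<in>L \<inter> ev C. f z \<in> od C) \<and> (\<forall>z\<in>L \<inter> od C. f z \<in> ev C) \<Longrightarrow>
           (f x \<in> ev C \<longrightarrow> x \<in> od C) \<and> (f x \<in> od C \<longrightarrow> x \<in> ev C)"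
  proof -
    assume h: "(\<forall>z\<in>L \<inter> ev C. f z \<in> od C) \<and> (\<forall>z\<in>L \<inter> od C. f z \<in> ev C)"
    have p: "f a \<in> od C" "f c \<in> ev C" using h ac by blast+
    have fx': "f x = f c + f a" using fx by (simp add: add.commute)
    have 1: "f x \<in> ev C \<longrightarrow> x \<in> od C"
    proof
      assume e: "f x \<in> ev C"
      have "f x + 0 = f c + f a" using fx' by simp
      then have "f a = 0" using decomp_unique[OF e p(2) zero_od p(1)] by simp
      then have "a = 0" using kill ac by blast
      then show "x \<in> od C" using ac by simp
    qed
    have 2: "f x \<in> od C \<longrightarrow> x \<in> ev C"
    proof
      assume e: "f x \<in> od C"
      have "0 + f x = f c + f a" using fx' by simp
      then have "f c = 0" using decomp_unique[OF zero_ev p(2) e p(1)] by simp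
      then have "c = 0" using kill ac by blast
      then show "x \<in> ev C" using ac by simp
    qed
    show ?thesis using 1 2 by blast
  qed
qed

lemma liso_sym:
  assumes L: "lideal C m L" and iso: "liso C m L X"
  shows "liso C m X L"
proof -
  obtain f where f: "bij_betw f L X" "\<forall>x\<in>L. \<forall>y\<in>L. f (x + y) = f x + f y"
    "\<forall>c. \<forall>x\<in>L. f (sc C c x) = sc C c (f x)"
    "((\<forall>x\<in>L \<inter> ev C. f x \<in> ev C) \<and> (\<forall>x\<in>L \<inter> od C. f x \<in> od C) \<and>
        (\<forall>b\<in>hom C m. \<forall>x\<in>L. f (cmp C b x) = cmp C b (f x)))
      \<or>
      ((\<forall>x\<in>L \<inter> ev C. f x \<in> od C) \<and> (\<forall>x\<in>L \<inter> od C. f x \<in> ev C) \<and>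
        (\<forall>b\<in>hom C m \<inter> ev C. \<forall>x\<in>L. f (cmp C b x) = cmp C b (f x)) \<and>
        (\<forall>b\<in>hom C m \<inter> od C. \<forall>x\<in>L. f (cmp C b x) = - cmp C b (f x)))"
    by (rule lisoE[OF iso])
  define g where "g = inv_into L f"
  have sL: "subspace L" using lidealD(1)[OF L] .
  have inj: "inj_on f L" using bij_betw_imp_inj_on[OF f(1)] .
  have img: "f ` L = X" using bij_betw_imp_surj_on[OF f(1)] .
  have bg: "bij_betw g X L" unfolding g_def using bij_betw_inv_into[OF f(1)] .
  have gf: "g (f x) = x" if "x \<in> L" for x unfolding g_def using inv_into_f_f[OF inj that] .
  have pre: "\<exists>x\<in>L. y = f x" if "y \<in> X" for y using img that by blast
  have gadd: "\<forall>x\<in>X. \<forall>y\<in>X. g (x + y) = g x + g y"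
  proof (intro ballI)
    fix y1 y2 assume "y1 \<in> X" "y2 \<in> X"
    then obtain x1 x2 where x: "x1 \<in> L" "x2 \<in> L" "y1 = f x1" "y2 = f x2" using pre by metis
    have "x1 + x2 \<in> L" using x sL subspace_add by blast
    then show "g (y1 + y2) = g y1 + g y2" using x f(2) gf by metis
  qed
  have gsc: "\<forall>c. \<forall>x\<in>X. g (sc C c x) = sc C c (g x)"
  proof (intro allI ballI)
    fix c y assume "y \<in> X"
    then obtain x where x: "x \<in> L" "y = f x" using pre by metis
    have "sc C c x \<in> L" using x sL subspace_scale by blast
    then show "g (sc C c y) = sc C c (g y)" using x f(3) gf by metis
  qed
  have gX: "g y \<in> L" "f (g y) = y" if "y \<in> X" for y
     apply (rule bij_betw_apply[OF bg that])
    unfolding g_def using f_inv_into_f[of y f L] that img by simp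
  have gcmp: "g (cmp C b y) = cmp C b (g y)" if "b \<in> hom C m" "y \<in> X" "f (cmp C b (g y)) = cmp C b y" for b y
  proof -
    have "cmp C b (g y) \<in> L" using lidealD(4)[OF L that(1) gX(1)[OF that(2)]] .
    then show ?thesis using gf that(3) by metis
  qed
  have gcmp': "g (cmp C b y) = - cmp C b (g y)" if "b \<in> hom C m" "y \<in> X" "f (cmp C b (g y)) = - cmp C b y" for b y
  proof -
    have c: "cmp C b (g y) \<in> L" using lidealD(4)[OF L that(1) gX(1)[OF that(2)]] .
    then have "f (- cmp C b (g y)) = cmp C b y" using add_neg[OF sL f(2) c] that(3) by simp
    moreover have "- cmp C b (g y) \<in> L" using c sL subspace_neg by blast
    ultimately show ?thesis using gf by metis
  qed
  show ?thesis
    using f(4)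
  proof
    assume E: "(\<forall>x\<in>L \<inter> ev C. f x \<in> ev C) \<and> (\<forall>x\<in>L \<inter> od C. f x \<in> od C) \<and>
        (\<forall>b\<in>hom C m. \<forall>x\<in>L. f (cmp C b x) = cmp C b (f x))"
    have par: "(f x \<in> ev C \<longrightarrow> x \<in> ev C) \<and> (f x \<in> od C \<longrightarrow> x \<in> od C)" if "x \<in> L" for x
      using parity_refl(1)[OF L inj f(2) that] E by blast
    have p1: "\<forall>y\<in>X \<inter> ev C. g y \<in> ev C" using par gX by (metis IntE)
    have p2: "\<forall>y\<in>X \<inter> od C. g y \<in> od C" using par gX by (metis IntE)
    have p3: "\<forall>b\<in>hom C m. \<forall>y\<in>X. g (cmp C b y) = cmp C b (g y)"
      using E gX gcmp by metis
    show ?thesis unfolding liso_def using bg gadd gsc p1 p2 p3 by blast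
  next
    assume O: "(\<forall>x\<in>L \<inter> ev C. f x \<in> od C) \<and> (\<forall>x\<in>L \<inter> od C. f x \<in> ev C) \<and>
        (\<forall>b\<in>hom C m \<inter> ev C. \<forall>x\<in>L. f (cmp C b x) = cmp C b (f x)) \<and>
        (\<forall>b\<in>hom C m \<inter> od C. \<forall>x\<in>L. f (cmp C b x) = - cmp C b (f x))"
    have par: "(f x \<in> ev C \<longrightarrow> x \<in> od C) \<and> (f x \<in> od C \<longrightarrow> x \<in> ev C)" if "x \<in> L" for x
      using parity_refl(2)[OF L inj f(2) that] O by blast
    have p1: "\<forall>y\<in>X \<inter> ev C. g y \<in> od C" using par gX by (metis IntE)
    have p2: "\<forall>y\<in>X \<inter> od C. g y \<in> ev C" using par gX by (metis IntE)
    have p3: "\<forall>b\<in>hom C m \<inter> ev C. \<forall>y\<in>X. g (cmp C b y) = cmp C b (g y)"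
      using O gX gcmp by (metis IntE)
    have p4: "\<forall>b\<in>hom C m \<inter> od C. \<forall>y\<in>X. g (cmp C b y) = - cmp C b (g y)"
      using O gX gcmp' by (metis IntE)
    show ?thesis unfolding liso_def using bg gadd gsc p1 p2 p3 p4 by blast
  qed
qed


lemma lisoI_E:
  assumes "bij_betw h L Y" "\<forall>x\<in>L. \<forall>y\<in>L. h (x + y) = h x + h y"
    "\<forall>c. \<forall>x\<in>L. h (sc C c x) = sc C c (h x)"
    "\<forall>x\<in>L \<inter> ev C. h x \<in> ev C" "\<forall>x\<in>L \<inter> od C. h x \<in> od C"
    "\<forall>b\<in>hom C m. \<forall>x\<in>L. h (cmp C b x) = cmp C b (h x)"
  shows "liso C m L Y"
  unfolding liso_def
  apply (rule exI[of _ h])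
  apply (intro conjI disjI1)
  by (fact assms)+

lemma lisoI_O:
  assumes "bij_betw h L Y" "\<forall>x\<in>L. \<forall>y\<in>L. h (x + y) = h x + h y"
    "\<forall>c. \<forall>x\<in>L. h (sc C c x) = sc C c (h x)"
    "\<forall>x\<in>L \<inter> ev C. h x \<in> od C" "\<forall>x\<in>L \<inter> od C. h x \<in> ev C"
    "\<forall>b\<in>hom C m \<inter> ev C. \<forall>x\<in>L. h (cmp C b x) = cmp C b (h x)"
    "\<forall>b\<in>hom C m \<inter> od C. \<forall>x\<in>L. h (cmp C b x) = - cmp C b (h x)"
  shows "liso C m L Y"
  unfolding liso_def
  apply (rule exI[of _ h])
  apply (intro conjI disjI2)
  by (fact assms)+

lemma hom_split:
  assumes "b \<in> hom C m"
  obtains b0 b1 where "b0 \<in> hom C m" "b0 \<in> ev C" "b1 \<in> hom C m" "b1 \<in> od C" "b = b0 + b1"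
  using gradedD[OF hom_graded assms] by metis

lemma liso_trans:
  assumes L: "lideal C m L" and X: "lideal C m X" and Yh: "Y \<subseteq> hom C m"
    and i1: "liso C m L X" and i2: "liso C m X Y"
  shows "liso C m L Y"
proof -
  obtain f where f: "bij_betw f L X" "\<forall>x\<in>L. \<forall>y\<in>L. f (x + y) = f x + f y"
    "\<forall>c. \<forall>x\<in>L. f (sc C c x) = sc C c (f x)"
    "((\<forall>x\<in>L \<inter> ev C. f x \<in> ev C) \<and> (\<forall>x\<in>L \<inter> od C. f x \<in> od C) \<and>
        (\<forall>b\<in>hom C m. \<forall>x\<in>L. f (cmp C b x) = cmp C b (f x)))
      \<or>
      ((\<forall>x\<in>L \<inter> ev C. f x \<in> od C) \<and> (\<forall>x\<in>L \<inter> od C. f x \<in> ev C) \<and>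
        (\<forall>b\<in>hom C m \<inter> ev C. \<forall>x\<in>L. f (cmp C b x) = cmp C b (f x)) \<and>
        (\<forall>b\<in>hom C m \<inter> od C. \<forall>x\<in>L. f (cmp C b x) = - cmp C b (f x)))"
    by (rule lisoE[OF i1])
  obtain g where g: "bij_betw g X Y" "\<forall>x\<in>X. \<forall>y\<in>X. g (x + y) = g x + g y"
    "\<forall>c. \<forall>x\<in>X. g (sc C c x) = sc C c (g x)"
    "((\<forall>x\<in>X \<inter> ev C. g x \<in> ev C) \<and> (\<forall>x\<in>X \<inter> od C. g x \<in> od C) \<and>
        (\<forall>b\<in>hom C m. \<forall>x\<in>X. g (cmp C b x) = cmp C b (g x)))
      \<or>
      ((\<forall>x\<in>X \<inter> ev C. g x \<in> od C) \<and> (\<forall>x\<in>X \<inter> od C. g x \<in> ev C) \<and>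
        (\<forall>b\<in>hom C m \<inter> ev C. \<forall>x\<in>X. g (cmp C b x) = cmp C b (g x)) \<and>
        (\<forall>b\<in>hom C m \<inter> od C. \<forall>x\<in>X. g (cmp C b x) = - cmp C b (g x)))"
    by (rule lisoE[OF i2])
  have fX: "f x \<in> X" if "x \<in> L" for x by (rule bij_betw_apply[OF f(1) that])
  have gY: "g y \<in> Y" if "y \<in> X" for y by (rule bij_betw_apply[OF g(1) that])
  have bh: "bij_betw (\<lambda>x. g (f x)) L Y" using bij_betw_trans[OF f(1) g(1)] by (simp add: comp_def)
  have hadd: "\<forall>x\<in>L. \<forall>y\<in>L. g (f (x + y)) = g (f x) + g (f y)"
    using f(2) g(2) fX by simp
  have hsc: "\<forall>c. \<forall>x\<in>L. g (f (sc C c x)) = sc C c (g (f x))"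
    using f(3) g(3) fX by simp
  have sX: "subspace X" using lidealD(1)[OF X] .
  have gneg: "g (- z) = - g z" if "z \<in> X" for z using add_neg[OF sX g(2) that] .
  have cX: "cmp C b (f x) \<in> X" if "b \<in> hom C m" "x \<in> L" for b x
    using lidealD(4)[OF X that(1) fX[OF that(2)]] .
  have cL: "cmp C b x \<in> L" if "b \<in> hom C m" "x \<in> L" for b x
    using lidealD(4)[OF L that] .
  have negX: "- cmp C b (f x) \<in> X" if "b \<in> hom C m" "x \<in> L" for b x
    using subspace_neg[OF sX cX[OF that]] .
  have gfh: "g (f x) \<in> hom C m" if "x \<in> L" for x using gY[OF fX[OF that]] Yh by blast
  show ?thesis
    using f(4)
  proof
    assume fE: "(\<forall>x\<in>L \<inter> ev C. f x \<in> ev C) \<and> (\<forall>x\<in>L \<inter> od C. f x \<in> od C) \<and>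
        (\<forall>b\<in>hom C m. \<forall>x\<in>L. f (cmp C b x) = cmp C b (f x))"
    show ?thesis
      using g(4)
    proof
      assume gE: "(\<forall>x\<in>X \<inter> ev C. g x \<in> ev C) \<and> (\<forall>x\<in>X \<inter> od C. g x \<in> od C) \<and>
        (\<forall>b\<in>hom C m. \<forall>x\<in>X. g (cmp C b x) = cmp C b (g x))"
      show ?thesis
      proof (rule lisoI_E[OF bh hadd hsc])
        show "\<forall>x\<in>L \<inter> ev C. g (f x) \<in> ev C"
        proof
          fix x assume x: "x \<in> L \<inter> ev C"
          have "f x \<in> ev C" using fE x by blast
          then have "f x \<in> X \<inter> ev C" using fX x by blast
          then show "g (f x) \<in> ev C" using gE by blast
        qed
        show "\<forall>x\<in>L \<inter> od C. g (f x) \<in> od C"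
        proof
          fix x assume x: "x \<in> L \<inter> od C"
          have "f x \<in> od C" using fE x by blast
          then have "f x \<in> X \<inter> od C" using fX x by blast
          then show "g (f x) \<in> od C" using gE by blast
        qed
        show "\<forall>b\<in>hom C m. \<forall>x\<in>L. g (f (cmp C b x)) = cmp C b (g (f x))"
          using fE gE fX by simp
      qed
    next
      assume gO: "(\<forall>x\<in>X \<inter> ev C. g x \<in> od C) \<and> (\<forall>x\<in>X \<inter> od C. g x \<in> ev C) \<and>
        (\<forall>b\<in>hom C m \<inter> ev C. \<forall>x\<in>X. g (cmp C b x) = cmp C b (g x)) \<and>
        (\<forall>b\<in>hom C m \<inter> od C. \<forall>x\<in>X. g (cmp C b x) = - cmp C b (g x))"
      show ?thesis
      proof (rule lisoI_O[OF bh hadd hsc])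
        show "\<forall>x\<in>L \<inter> ev C. g (f x) \<in> od C"
        proof
          fix x assume x: "x \<in> L \<inter> ev C"
          have "f x \<in> ev C" using fE x by blast
          then have "f x \<in> X \<inter> ev C" using fX x by blast
          then show "g (f x) \<in> od C" using gO by blast
        qed
        show "\<forall>x\<in>L \<inter> od C. g (f x) \<in> ev C"
        proof
          fix x assume x: "x \<in> L \<inter> od C"
          have "f x \<in> od C" using fE x by blast
          then have "f x \<in> X \<inter> od C" using fX x by blast
          then show "g (f x) \<in> ev C" using gO by blast
        qed
        show "\<forall>b\<in>hom C m \<inter> ev C. \<forall>x\<in>L. g (f (cmp C b x)) = cmp C b (g (f x))"
        proof (intro ballI)
          fix b x assume b: "b \<in> hom C m \<inter> ev C" and x: "x \<in> L"
          have "f (cmp C b x) = cmp C b (f x)" using fE b x by blast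
          moreover have "g (cmp C b (f x)) = cmp C b (g (f x))" using gO b fX[OF x] by blast
          ultimately show "g (f (cmp C b x)) = cmp C b (g (f x))" by simp
        qed
        show "\<forall>b\<in>hom C m \<inter> od C. \<forall>x\<in>L. g (f (cmp C b x)) = - cmp C b (g (f x))"
        proof (intro ballI)
          fix b x assume b: "b \<in> hom C m \<inter> od C" and x: "x \<in> L"
          have "f (cmp C b x) = cmp C b (f x)" using fE b x by blast
          moreover have "g (cmp C b (f x)) = - cmp C b (g (f x))" using gO b fX[OF x] by blast
          ultimately show "g (f (cmp C b x)) = - cmp C b (g (f x))" by simp
        qed
      qed
    qed
  next
    assume fO: "(\<forall>x\<in>L \<inter> ev C. f x \<in> od C) \<and> (\<forall>x\<in>L \<inter> od C. f x \<in> ev C) \<and>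
        (\<forall>b\<in>hom C m \<inter> ev C. \<forall>x\<in>L. f (cmp C b x) = cmp C b (f x)) \<and>
        (\<forall>b\<in>hom C m \<inter> od C. \<forall>x\<in>L. f (cmp C b x) = - cmp C b (f x))"
    show ?thesis
      using g(4)
    proof
      assume gE: "(\<forall>x\<in>X \<inter> ev C. g x \<in> ev C) \<and> (\<forall>x\<in>X \<inter> od C. g x \<in> od C) \<and>
        (\<forall>b\<in>hom C m. \<forall>x\<in>X. g (cmp C b x) = cmp C b (g x))"
      show ?thesis
      proof (rule lisoI_O[OF bh hadd hsc])
        show "\<forall>x\<in>L \<inter> ev C. g (f x) \<in> od C"
        proof
          fix x assume x: "x \<in> L \<inter> ev C"
          have "f x \<in> od C" using fO x by blast
          then have "f x \<in> X \<inter> od C" using fX x by blast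
          then show "g (f x) \<in> od C" using gE by blast
        qed
        show "\<forall>x\<in>L \<inter> od C. g (f x) \<in> ev C"
        proof
          fix x assume x: "x \<in> L \<inter> od C"
          have "f x \<in> ev C" using fO x by blast
          then have "f x \<in> X \<inter> ev C" using fX x by blast
          then show "g (f x) \<in> ev C" using gE by blast
        qed
        show "\<forall>b\<in>hom C m \<inter> ev C. \<forall>x\<in>L. g (f (cmp C b x)) = cmp C b (g (f x))"
        proof (intro ballI)
          fix b x assume b: "b \<in> hom C m \<inter> ev C" and x: "x \<in> L"
          have "f (cmp C b x) = cmp C b (f x)" using fO b x by blast
          moreover have "g (cmp C b (f x)) = cmp C b (g (f x))" using gE b fX[OF x] by blast
          ultimately show "g (f (cmp C b x)) = cmp C b (g (f x))" by simp
        qed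
        show "\<forall>b\<in>hom C m \<inter> od C. \<forall>x\<in>L. g (f (cmp C b x)) = - cmp C b (g (f x))"
        proof (intro ballI)
          fix b x assume b: "b \<in> hom C m \<inter> od C" and x: "x \<in> L"
          have bh: "b \<in> hom C m" using b by blast
          have "f (cmp C b x) = - cmp C b (f x)" using fO b x by blast
          moreover have "g (- cmp C b (f x)) = - g (cmp C b (f x))" using gneg cX[OF bh x] by blast
          moreover have "g (cmp C b (f x)) = cmp C b (g (f x))" using gE b fX[OF x] by blast
          ultimately show "g (f (cmp C b x)) = - cmp C b (g (f x))" by simp
        qed
      qed
    next
      assume gO: "(\<forall>x\<in>X \<inter> ev C. g x \<in> od C) \<and> (\<forall>x\<in>X \<inter> od C. g x \<in> ev C) \<and>
        (\<forall>b\<in>hom C m \<inter> ev C. \<forall>x\<in>X. g (cmp C b x) = cmp C b (g x)) \<and>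
        (\<forall>b\<in>hom C m \<inter> od C. \<forall>x\<in>X. g (cmp C b x) = - cmp C b (g x))"
      show ?thesis
      proof (rule lisoI_E[OF bh hadd hsc])
        show "\<forall>x\<in>L \<inter> ev C. g (f x) \<in> ev C"
        proof
          fix x assume x: "x \<in> L \<inter> ev C"
          have "f x \<in> od C" using fO x by blast
          then have "f x \<in> X \<inter> od C" using fX x by blast
          then show "g (f x) \<in> ev C" using gO by blast
        qed
        show "\<forall>x\<in>L \<inter> od C. g (f x) \<in> od C"
        proof
          fix x assume x: "x \<in> L \<inter> od C"
          have "f x \<in> ev C" using fO x by blast
          then have "f x \<in> X \<inter> ev C" using fX x by blast
          then show "g (f x) \<in> od C" using gO by blast
        qed
        show "\<forall>b\<in>hom C m. \<forall>x\<in>L. g (f (cmp C b x)) = cmp C b (g (f x))"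
        proof (intro ballI)
          fix b x assume b: "b \<in> hom C m" and x: "x \<in> L"
          obtain b0 b1 where bb: "b0 \<in> hom C m" "b0 \<in> ev C" "b1 \<in> hom C m" "b1 \<in> od C" "b = b0 + b1"
            using hom_split[OF b] by metis
          have xh: "x \<in> hom C m" using x lidealD(2)[OF L] by blast
          have "cmp C b x = cmp C b0 x + cmp C b1 x" using distr[OF bb(1) bb(3) xh] bb(5) by simp
          then have "f (cmp C b x) = f (cmp C b0 x) + f (cmp C b1 x)"
            using f(2) cL[OF bb(1) x] cL[OF bb(3) x] by simp
          also have "\<dots> = cmp C b0 (f x) + - cmp C b1 (f x)"
          proof -
            have "f (cmp C b0 x) = cmp C b0 (f x)" using fO bb(1,2) x by blast
            moreover have "f (cmp C b1 x) = - cmp C b1 (f x)" using fO bb(3,4) x by blast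
            ultimately show ?thesis by simp
          qed
          finally have 1: "f (cmp C b x) = cmp C b0 (f x) + - cmp C b1 (f x)" .
          have "g (cmp C b0 (f x) + - cmp C b1 (f x)) = g (cmp C b0 (f x)) + g (- cmp C b1 (f x))"
            using g(2) cX[OF bb(1) x] negX[OF bb(3) x] by blast
          also have "\<dots> = g (cmp C b0 (f x)) + - g (cmp C b1 (f x))" using gneg cX[OF bb(3) x] by simp
          also have "\<dots> = cmp C b0 (g (f x)) + cmp C b1 (g (f x))"
            using gO bb fX[OF x] by simp
          also have "\<dots> = cmp C b (g (f x))" using distr[OF bb(1) bb(3) gfh[OF x]] bb(5) by simp
          finally show "g (f (cmp C b x)) = cmp C b (g (f x))" using 1 by simp
        qed
      qed
    qed
  qed
qed

definition (in -) epart :: "('k, 'a::ab_group_add, 'z) msc_scheme \<Rightarrow> 'a \<Rightarrow> 'a" where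
  "epart C y = (SOME a. a \<in> ev C \<and> y - a \<in> od C)"

definition (in -) tw :: "('k, 'a::ab_group_add, 'z) msc_scheme \<Rightarrow> 'a \<Rightarrow> 'a" where
  "tw C y = epart C y - (y - epart C y)"

lemma ep_eq:
  assumes "a \<in> ev C" "c \<in> od C"
  shows "epart C (a + c) = a"
proof -
  have ex: "a \<in> ev C \<and> (a + c) - a \<in> od C" using assms by simp
  define a' where "a' = epart C (a + c)"
  have "a' \<in> ev C \<and> (a + c) - a' \<in> od C"
    unfolding a'_def epart_def by (rule someI[of "\<lambda>a'. a' \<in> ev C \<and> (a + c) - a' \<in> od C", OF ex])
  moreover have "a' + ((a + c) - a') = a + c" by simp
  ultimately have "a' = a" using decomp_unique[of a' a "(a + c) - a'" c] assms by blast
  then show ?thesis unfolding a'_def .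
qed

lemma tw_eq:
  assumes "a \<in> ev C" "c \<in> od C"
  shows "tw C (a + c) = a - c"
  unfolding tw_def using ep_eq[OF assms] by simp

lemma tw_ev: "y \<in> ev C \<Longrightarrow> tw C y = y"
  using tw_eq[of y 0] zero_od by simp

lemma tw_od: "y \<in> od C \<Longrightarrow> tw C y = - y"
  using tw_eq[of 0 y] zero_ev by simp

lemma tw_props:
  assumes L: "lideal C m L" and y: "y \<in> L"
  shows "tw C y \<in> L" "tw C (tw C y) = y"
proof -
  obtain a c where ac: "a \<in> L" "a \<in> ev C" "c \<in> L" "c \<in> od C" "y = a + c"
    using gradedD[OF lidealD(3)[OF L] y] by metis
  have t: "tw C y = a - c" using tw_eq ac by simp
  then show "tw C y \<in> L" using subspace_diff[OF lidealD(1)[OF L] ac(1) ac(3)] by simp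
  have "-c \<in> od C" using subspace_neg[OF od_sub ac(4)] .
  then have "tw C (a + - c) = a - - c" using tw_eq ac(2) by blast
  then show "tw C (tw C y) = y" using t ac(5) by simp
qed

lemma tw_add:
  assumes L: "lideal C m L" and y: "y \<in> L" "z \<in> L"
  shows "tw C (y + z) = tw C y + tw C z"
proof -
  obtain a c where ac: "a \<in> ev C" "c \<in> od C" "y = a + c"
    using gradedD[OF lidealD(3)[OF L] y(1)] by metis
  obtain a' c' where ac': "a' \<in> ev C" "c' \<in> od C" "z = a' + c'"
    using gradedD[OF lidealD(3)[OF L] y(2)] by metis
  have "a + a' \<in> ev C" using subspace_add[OF ev_sub] ac ac' by blast
  moreover have "c + c' \<in> od C" using subspace_add[OF od_sub] ac ac' by blast
  moreover have "y + z = (a + a') + (c + c')" using ac ac' by (simp add: algebra_simps)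
  ultimately have 1: "tw C (y + z) = (a + a') - (c + c')" using tw_eq by metis
  have 2: "tw C y = a - c" "tw C z = a' - c'" using tw_eq ac ac' by metis+
  show ?thesis unfolding 1 2 by (simp add: algebra_simps)
qed

lemma tw_sc:
  assumes L: "lideal C m L" and y: "y \<in> L"
  shows "tw C (sc C k y) = sc C k (tw C y)"
proof -
  obtain a c where ac: "a \<in> ev C" "c \<in> od C" "y = a + c"
    using gradedD[OF lidealD(3)[OF L] y] by metis
  have "sc C k a \<in> ev C" "sc C k c \<in> od C" using subspace_scale ev_sub od_sub ac by blast+
  moreover have "sc C k y = sc C k a + sc C k c" using ac by (simp add: scale_right_distrib)
  ultimately have "tw C (sc C k y) = sc C k a - sc C k c" using tw_eq by simp
  then show ?thesis using tw_eq ac by (simp add: scale_right_diff_distrib)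
qed

lemma tw_cmp:
  assumes L: "lideal C m L" and y: "y \<in> L" and x: "x \<in> hom C m"
  shows "x \<in> ev C \<Longrightarrow> tw C (cmp C x y) = cmp C x (tw C y)"
    and "x \<in> od C \<Longrightarrow> tw C (cmp C x y) = - cmp C x (tw C y)"
proof -
  obtain a c where ac: "a \<in> L" "a \<in> ev C" "c \<in> L" "c \<in> od C" "y = a + c"
    using gradedD[OF lidealD(3)[OF L] y] by metis
  have ah: "a \<in> hom C m" "c \<in> hom C m" using ac lidealD(2)[OF L] by blast+
  have e: "cmp C x y = cmp C x a + cmp C x c" using distl[OF ah x] ac(5) by simp
  have t: "tw C y = a - c" using tw_eq ac by simp
  have d: "cmp C x (a - c) = cmp C x a - cmp C x c" using cmp_diffr[OF ah x] .
  show "x \<in> ev C \<Longrightarrow> tw C (cmp C x y) = cmp C x (tw C y)"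
  proof -
    assume xe: "x \<in> ev C"
    have "cmp C x a \<in> ev C" "cmp C x c \<in> od C" using par_ee par_eo x ah xe ac by blast+
    then have "tw C (cmp C x y) = cmp C x a - cmp C x c" using tw_eq e by simp
    then show ?thesis using t d by simp
  qed
  show "x \<in> od C \<Longrightarrow> tw C (cmp C x y) = - cmp C x (tw C y)"
  proof -
    assume xo: "x \<in> od C"
    have "cmp C x c \<in> ev C" "cmp C x a \<in> od C" using par_oo par_oe x ah xo ac by blast+
    moreover have "cmp C x y = cmp C x c + cmp C x a" using e by (simp add: add.commute)
    ultimately have "tw C (cmp C x y) = cmp C x c - cmp C x a" using tw_eq by simp
    then show ?thesis using t d by simp
  qed
qed


lemma lideal_zero: "lideal C m {0}"
  unfolding lideal_def graded_def
  using zero_hom[of m] zero_ev zero_od cmp_0r by auto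

lemma rmul_lideal:
  assumes L: "lideal C m L" and b: "b \<in> hom C m" "b \<in> ev C \<or> b \<in> od C"
  shows "lideal C m ((\<lambda>y. cmp C y b) ` L)"
proof -
  let ?I = "(\<lambda>y. cmp C y b) ` L"
  have sL: "subspace L" using lidealD(1)[OF L] .
  have Lh: "L \<subseteq> hom C m" using lidealD(2)[OF L] .
  have s: "subspace ?I"
  proof (rule subspaceI)
    show "0 \<in> ?I" using subspace_0[OF sL] cmp_0l[OF b(1)] by (metis image_eqI)
  next
    fix u v assume "u \<in> ?I" "v \<in> ?I"
    then obtain x y where xy: "x \<in> L" "y \<in> L" "u = cmp C x b" "v = cmp C y b" by blast
    have "u + v = cmp C (x + y) b" using distr[of x m y b] xy Lh b(1) by (simp add: subset_iff)
    moreover have "x + y \<in> L" using subspace_add[OF sL xy(1,2)] .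
    ultimately show "u + v \<in> ?I" by blast
  next
    fix c u assume "u \<in> ?I"
    then obtain x where x: "x \<in> L" "u = cmp C x b" by blast
    have "sc C c u = cmp C (sc C c x) b" using scl[of x m b c] x Lh b(1) by (simp add: subset_iff)
    moreover have "sc C c x \<in> L" using subspace_scale[OF sL x(1)] .
    ultimately show "sc C c u \<in> ?I" by blast
  qed
  have h: "?I \<subseteq> hom C m" using cmp_hom Lh b(1) by blast
  have g: "graded C ?I"
    unfolding graded_def
  proof
    fix u assume "u \<in> ?I"
    then obtain y where y: "y \<in> L" "u = cmp C y b" by blast
    obtain a c where ac: "a \<in> L" "a \<in> ev C" "c \<in> L" "c \<in> od C" "y = a + c"
      using gradedD[OF lidealD(3)[OF L] y(1)] by metis
    have ah: "a \<in> hom C m" "c \<in> hom C m" using ac Lh by blast+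
    have e: "u = cmp C a b + cmp C c b" using distr[OF ah b(1)] ac(5) y(2) by simp
    have i: "cmp C a b \<in> ?I" "cmp C c b \<in> ?I" using ac by blast+
    show "\<exists>a\<in>?I \<inter> ev C. \<exists>b\<in>?I \<inter> od C. u = a + b"
      using b(2)
    proof
      assume be: "b \<in> ev C"
      have "cmp C a b \<in> ev C" "cmp C c b \<in> od C" using par_ee par_oe ah b(1) be ac by blast+
      then show ?thesis using e i by blast
    next
      assume bo: "b \<in> od C"
      have "cmp C c b \<in> ev C" "cmp C a b \<in> od C" using par_oo par_eo ah b(1) bo ac by blast+
      moreover have "u = cmp C c b + cmp C a b" using e by (simp add: add.commute)
      ultimately show ?thesis using i by blast
    qed
  qed
  have l: "\<forall>x\<in>hom C m. \<forall>u\<in>?I. cmp C x u \<in> ?I"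
  proof (intro ballI)
    fix x u assume x: "x \<in> hom C m" and "u \<in> ?I"
    then obtain y where y: "y \<in> L" "u = cmp C y b" by blast
    have "cmp C x u = cmp C (cmp C x y) b" using assoc[of x m y b] x y Lh b(1) by (simp add: subset_iff)
    moreover have "cmp C x y \<in> L" using lidealD(4)[OF L x y(1)] .
    ultimately show "cmp C x u \<in> ?I" by blast
  qed
  show ?thesis unfolding lideal_def using s h g l by blast
qed

lemma rmul_pre:
  assumes L: "lideal C m L" and b: "b \<in> hom C m" "b \<in> ev C \<or> b \<in> od C" and K: "lideal C m K"
  shows "lideal C m {y \<in> L. cmp C y b \<in> K}"
proof -
  let ?P = "{y \<in> L. cmp C y b \<in> K}"
  have sL: "subspace L" using lidealD(1)[OF L] .
  have sK: "subspace K" using lidealD(1)[OF K] .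
  have Lh: "L \<subseteq> hom C m" using lidealD(2)[OF L] .
  have s: "subspace ?P"
  proof (rule subspaceI)
    show "0 \<in> ?P" using subspace_0[OF sL] subspace_0[OF sK] cmp_0l[OF b(1)] by simp
  next
    fix x y assume xy: "x \<in> ?P" "y \<in> ?P"
    have "cmp C (x + y) b = cmp C x b + cmp C y b" using distr[of x m y b] xy Lh b(1) by (simp add: subset_iff)
    then show "x + y \<in> ?P" using xy subspace_add[OF sL] subspace_add[OF sK] by auto
  next
    fix c x assume x: "x \<in> ?P"
    have "cmp C (sc C c x) b = sc C c (cmp C x b)" using scl[of x m b c] x Lh b(1) by (simp add: subset_iff)
    then show "sc C c x \<in> ?P" using x subspace_scale[OF sL] subspace_scale[OF sK] by auto
  qed
  have h: "?P \<subseteq> hom C m" using Lh by blast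
  have g: "graded C ?P"
    unfolding graded_def
  proof
    fix y assume y: "y \<in> ?P"
    obtain a c where ac: "a \<in> L" "a \<in> ev C" "c \<in> L" "c \<in> od C" "y = a + c"
      using gradedD[OF lidealD(3)[OF L]] y by blast
    have ah: "a \<in> hom C m" "c \<in> hom C m" using ac Lh by blast+
    have e: "cmp C y b = cmp C a b + cmp C c b" using distr[OF ah b(1)] ac(5) by simp
    have yK: "cmp C y b \<in> K" using y by blast
    have "cmp C a b \<in> K \<and> cmp C c b \<in> K"
      using b(2)
    proof
      assume be: "b \<in> ev C"
      have "cmp C a b \<in> ev C" "cmp C c b \<in> od C" using par_ee par_oe ah b(1) be ac by blast+
      then show ?thesis using graded_parts[OF lidealD(3)[OF K] yK e] by blast
    next
      assume bo: "b \<in> od C"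
      have "cmp C c b \<in> ev C" "cmp C a b \<in> od C" using par_oo par_eo ah b(1) bo ac by blast+
      moreover have "cmp C y b = cmp C c b + cmp C a b" using e by (simp add: add.commute)
      ultimately show ?thesis using graded_parts[OF lidealD(3)[OF K] yK] by blast
    qed
    then show "\<exists>a\<in>?P \<inter> ev C. \<exists>b\<in>?P \<inter> od C. y = a + b" using ac by blast
  qed
  have l: "\<forall>x\<in>hom C m. \<forall>y\<in>?P. cmp C x y \<in> ?P"
  proof (intro ballI)
    fix x y assume x: "x \<in> hom C m" and y: "y \<in> ?P"
    have "cmp C (cmp C x y) b = cmp C x (cmp C y b)" using assoc[of x m y b] x y Lh b(1) by (simp add: subset_iff)
    moreover have "cmp C x (cmp C y b) \<in> K" using lidealD(4)[OF K x] y by blast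
    moreover have "cmp C x y \<in> L" using lidealD(4)[OF L x] y by blast
    ultimately show "cmp C x y \<in> ?P" by simp
  qed
  show ?thesis unfolding lideal_def using s h g l by blast
qed

lemma rmul_image:
  assumes Lm: "mlideal C m L" and b: "b \<in> hom C m" "b \<in> ev C \<or> b \<in> od C"
  shows "(\<lambda>y. cmp C y b) ` L = {0} \<or>
    (mlideal C m ((\<lambda>y. cmp C y b) ` L) \<and> liso C m L ((\<lambda>y. cmp C y b) ` L))"
proof -
  let ?I = "(\<lambda>y. cmp C y b) ` L"
  have L: "lideal C m L" and L0: "L \<noteq> {0}"
    and min: "\<And>L'. lideal C m L' \<Longrightarrow> L' \<subseteq> L \<Longrightarrow> L' = {0} \<or> L' = L"
    using Lm unfolding mlideal_def by blast+
  have sL: "subspace L" using lidealD(1)[OF L] .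
  have Lh: "L \<subseteq> hom C m" using lidealD(2)[OF L] .
  have z: "0 \<in> L" using subspace_0[OF sL] .
  have lI: "lideal C m ?I" using rmul_lideal[OF L b] .
  have P0: "lideal C m {y \<in> L. cmp C y b \<in> {0}}" using rmul_pre[OF L b lideal_zero] .
  have "{y \<in> L. cmp C y b \<in> {0}} = {0} \<or> {y \<in> L. cmp C y b \<in> {0}} = L"
    using min[OF P0] by blast
  then show ?thesis
  proof
    assume "{y \<in> L. cmp C y b \<in> {0}} = L"
    then have "\<forall>y\<in>L. cmp C y b = 0" by blast
    then have "?I = {0}" using z by auto
    then show ?thesis by blast
  next
    assume K0: "{y \<in> L. cmp C y b \<in> {0}} = {0}"
    have kz: "y = 0" if "y \<in> L" "cmp C y b = 0" for y using K0 that by blast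
    have inj: "inj_on (\<lambda>y. cmp C y b) L"
    proof (rule inj_onI)
      fix x y assume xy: "x \<in> L" "y \<in> L" "cmp C x b = cmp C y b"
      have "cmp C (x - y) b = 0" using cmp_diffl[of x m y b] xy Lh b(1) by (simp add: subset_iff)
      moreover have "x - y \<in> L" using subspace_diff[OF sL xy(1,2)] .
      ultimately have "x - y = 0" using kz by blast
      then show "x = y" by simp
    qed
    have mI: "mlideal C m ?I"
      unfolding mlideal_def
    proof (intro conjI allI impI)
      show "lideal C m ?I" using lI .
      show "?I \<noteq> {0}"
      proof
        assume I0: "?I = {0}"
        obtain y where y: "y \<in> L" "y \<noteq> 0" using L0 z by blast
        have "cmp C y b = 0" using I0 y(1) by blast
        then show False using kz y by blast
      qed
    next
      fix K assume K: "lideal C m K \<and> K \<subseteq> ?I"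
      have PK: "lideal C m {y \<in> L. cmp C y b \<in> K}" using rmul_pre[OF L b] K by blast
      have "{y \<in> L. cmp C y b \<in> K} = {0} \<or> {y \<in> L. cmp C y b \<in> K} = L"
        using min[OF PK] by blast
      then show "K = {0} \<or> K = ?I"
      proof
        assume P0: "{y \<in> L. cmp C y b \<in> K} = {0}"
        have "K \<subseteq> {0}"
        proof
          fix k assume k: "k \<in> K"
          then have "k \<in> ?I" using K by blast
          then obtain y where y: "y \<in> L" "k = cmp C y b" by blast
          then have "y \<in> {y \<in> L. cmp C y b \<in> K}" using k by blast
          then have "y = 0" using P0 by blast
          then show "k \<in> {0}" using y cmp_0l[OF b(1)] by simp
        qed
        moreover have "0 \<in> K" using subspace_0[OF lidealD(1)] K by blast
        ultimately show ?thesis by blast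
      next
        assume "{y \<in> L. cmp C y b \<in> K} = L"
        then have "?I \<subseteq> K" by blast
        then show ?thesis using K by blast
      qed
    qed
    have iso: "liso C m L ?I"
    proof (cases "b \<in> ev C")
      case be: True
      have bij: "bij_betw (\<lambda>y. cmp C y b) L ?I" unfolding bij_betw_def using inj by simp
      show ?thesis
      proof (rule lisoI_E[OF bij])
        show "\<forall>x\<in>L. \<forall>y\<in>L. cmp C (x + y) b = cmp C x b + cmp C y b"
          using distr Lh b(1) by blast
        show "\<forall>c. \<forall>x\<in>L. cmp C (sc C c x) b = sc C c (cmp C x b)"
          using scl Lh b(1) by blast
        show "\<forall>x\<in>L \<inter> ev C. cmp C x b \<in> ev C" using par_ee Lh b(1) be by blast
        show "\<forall>x\<in>L \<inter> od C. cmp C x b \<in> od C" using par_oe Lh b(1) be by blast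
        show "\<forall>a\<in>hom C m. \<forall>x\<in>L. cmp C (cmp C a x) b = cmp C a (cmp C x b)"
          using assoc Lh b(1) by blast
      qed
    next
      case False
      then have bo: "b \<in> od C" using b(2) by blast
      let ?h = "\<lambda>y. cmp C (tw C y) b"
      have twL: "tw C y \<in> L" "tw C (tw C y) = y" if "y \<in> L" for y using tw_props[OF L that] by blast+
      have twh: "tw C y \<in> hom C m" if "y \<in> L" for y using twL(1)[OF that] Lh by blast
      have bij: "bij_betw ?h L ?I"
        unfolding bij_betw_def
      proof
        show "inj_on ?h L"
        proof (rule inj_onI)
          fix x y assume xy: "x \<in> L" "y \<in> L" "?h x = ?h y"
          then have "tw C x = tw C y" using inj twL unfolding inj_on_def by blast
          then show "x = y" using twL xy by metis
        qed
        show "?h ` L = ?I"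
        proof
          show "?h ` L \<subseteq> ?I" using twL by blast
          show "?I \<subseteq> ?h ` L"
          proof
            fix u assume "u \<in> ?I"
            then obtain y where y: "y \<in> L" "u = cmp C y b" by blast
            then have "u = ?h (tw C y)" using twL by simp
            then show "u \<in> ?h ` L" using twL y by blast
          qed
        qed
      qed
      show ?thesis
      proof (rule lisoI_O[OF bij])
        show "\<forall>x\<in>L. \<forall>y\<in>L. ?h (x + y) = ?h x + ?h y"
        proof (intro ballI)
          fix x y assume xy: "x \<in> L" "y \<in> L"
          show "?h (x + y) = ?h x + ?h y" using tw_add[OF L xy] distr[OF twh twh b(1)] xy by simp
        qed
        show "\<forall>c. \<forall>x\<in>L. ?h (sc C c x) = sc C c (?h x)"
        proof (intro allI ballI)
          fix c x assume x: "x \<in> L"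
          show "?h (sc C c x) = sc C c (?h x)" using tw_sc[OF L x] scl[OF twh[OF x] b(1)] by simp
        qed
        show "\<forall>x\<in>L \<inter> ev C. ?h x \<in> od C"
        proof
          fix x assume x: "x \<in> L \<inter> ev C"
          then have "tw C x = x" using tw_ev by blast
          then show "?h x \<in> od C" using par_eo[of x m b] x Lh b(1) bo by auto
        qed
        show "\<forall>x\<in>L \<inter> od C. ?h x \<in> ev C"
        proof
          fix x assume x: "x \<in> L \<inter> od C"
          then have xh: "x \<in> hom C m" using Lh by blast
          have "tw C x = - x" using tw_od x by blast
          then have "?h x = - cmp C x b" using cmp_negl[OF xh b(1)] by simp
          moreover have "cmp C x b \<in> ev C" using par_oo[OF xh b(1)] x bo by blast
          ultimately show "?h x \<in> ev C" using subspace_neg[OF ev_sub] by simp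
        qed
        show "\<forall>a\<in>hom C m \<inter> ev C. \<forall>x\<in>L. ?h (cmp C a x) = cmp C a (?h x)"
        proof (intro ballI)
          fix a x assume a: "a \<in> hom C m \<inter> ev C" and x: "x \<in> L"
          have "tw C (cmp C a x) = cmp C a (tw C x)" using tw_cmp(1)[OF L x] a by blast
          then show "?h (cmp C a x) = cmp C a (?h x)" using assoc[OF _ twh[OF x] b(1)] a by simp
        qed
        show "\<forall>a\<in>hom C m \<inter> od C. \<forall>x\<in>L. ?h (cmp C a x) = - cmp C a (?h x)"
        proof (intro ballI)
          fix a x assume a: "a \<in> hom C m \<inter> od C" and x: "x \<in> L"
          have ah: "a \<in> hom C m" using a by blast
          have "tw C (cmp C a x) = - cmp C a (tw C x)" using tw_cmp(2)[OF L x] a by blast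
          then have "?h (cmp C a x) = - cmp C (cmp C a (tw C x)) b"
            using cmp_negl[OF cmp_hom[OF ah twh[OF x]] b(1)] by simp
          then show "?h (cmp C a x) = - cmp C a (?h x)" using assoc[OF ah twh[OF x] b(1)] by simp
        qed
      qed
    qed
    show ?thesis using mI iso by blast
  qed
qed


lemma Lam_elem:
  assumes "mu \<in> Lam C m"
  obtains L0 where "mlideal C m L0" "mu = {L'. mlideal C m L' \<and> liso C m L0 L'}"
  using assms unfolding Lam_def by blast

lemma mlideal_lideal: "mlideal C m L \<Longrightarrow> lideal C m L"
  unfolding mlideal_def by blast

lemma class_hom:
  assumes "mu \<in> Lam C m"
  shows "\<Union>mu \<subseteq> hom C m" "Jlam C mu \<subseteq> hom C m"
proof -
  obtain L0 where L0: "mlideal C m L0" "mu = {L'. mlideal C m L' \<and> liso C m L0 L'}"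
    using Lam_elem[OF assms] by metis
  show U: "\<Union>mu \<subseteq> hom C m"
  proof
    fix x assume "x \<in> \<Union>mu"
    then obtain L' where "L' \<in> mu" "x \<in> L'" by blast
    then show "x \<in> hom C m" using L0(2) lidealD(2)[OF mlideal_lideal] by blast
  qed
  show "Jlam C mu \<subseteq> hom C m" unfolding Jlam_def using span_hom[OF U] .
qed

lemma class_rmul:
  assumes mu: "mu \<in> Lam C m" and L': "L' \<in> mu" and b: "b \<in> hom C m" and x: "x \<in> L'"
  shows "cmp C x b \<in> Jlam C mu"
proof -
  obtain L0 where L0: "mlideal C m L0" "mu = {L'. mlideal C m L' \<and> liso C m L0 L'}"
    using Lam_elem[OF mu] by metis
  have mL': "mlideal C m L'" and iL': "liso C m L0 L'" using L' L0(2) by blast+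
  have lL': "lideal C m L'" using mlideal_lideal[OF mL'] .
  have xh: "x \<in> hom C m" using x lidealD(2)[OF lL'] by blast
  have one: "cmp C x c \<in> Jlam C mu" if c: "c \<in> hom C m" "c \<in> ev C \<or> c \<in> od C" for c
  proof -
    have "(\<lambda>y. cmp C y c) ` L' = {0} \<or>
      (mlideal C m ((\<lambda>y. cmp C y c) ` L') \<and> liso C m L' ((\<lambda>y. cmp C y c) ` L'))"
      using rmul_image[OF mL' c] .
    then show ?thesis
    proof
      assume "(\<lambda>y. cmp C y c) ` L' = {0}"
      then have "cmp C x c = 0" using x by blast
      then show ?thesis unfolding Jlam_def using span_zero by simp
    next
      assume A: "mlideal C m ((\<lambda>y. cmp C y c) ` L') \<and> liso C m L' ((\<lambda>y. cmp C y c) ` L')"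
      have "liso C m L0 ((\<lambda>y. cmp C y c) ` L')"
        using liso_trans[OF mlideal_lideal[OF L0(1)] lL' _ iL'] A lidealD(2)[OF mlideal_lideal] by blast
      then have "(\<lambda>y. cmp C y c) ` L' \<in> mu" using A L0(2) by blast
      moreover have "cmp C x c \<in> (\<lambda>y. cmp C y c) ` L'" using x by blast
      ultimately have "cmp C x c \<in> \<Union>mu" by blast
      then show ?thesis unfolding Jlam_def using span_base by blast
    qed
  qed
  obtain b0 b1 where bb: "b0 \<in> hom C m" "b0 \<in> ev C" "b1 \<in> hom C m" "b1 \<in> od C" "b = b0 + b1"
    using hom_split[OF b] by metis
  have "cmp C x b = cmp C x b0 + cmp C x b1" using distl[OF bb(1) bb(3) xh] bb(5) by simp
  then show ?thesis using one bb span_add unfolding Jlam_def by metis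
qed

lemma homog_cmp:
  assumes "x \<in> hom C m" "y \<in> hom C m" "x \<in> ev C \<or> x \<in> od C" "y \<in> ev C \<or> y \<in> od C"
  shows "cmp C x y \<in> ev C \<or> cmp C x y \<in> od C"
  using assms par_ee par_eo par_oe par_oo by blast

lemma homog_amg:
  assumes "a \<in> hom C p" "s \<in> hom C q" "a \<in> ev C \<or> a \<in> od C" "s \<in> ev C \<or> s \<in> od C"
  shows "amg C a s \<in> ev C \<or> amg C a s \<in> od C"
  using assms amg_par[OF assms(1,2)] by blast

lemma amg_hom1: "a \<in> hom C 1 \<Longrightarrow> s \<in> hom C n \<Longrightarrow> amg C a s \<in> hom C (Suc n)"
  using amg_hom[of a 1 s n] by simp

lemma Ind_lideal:
  assumes S: "lideal C n S"
  shows "lideal C (Suc n) (Ind C n S)"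
proof -
  define G where "G = {cmp C x (amg C a s) | x a s. x \<in> hom C (Suc n) \<and> a \<in> hom C 1 \<and> s \<in> S}"
  define G' where "G' = {cmp C x (amg C a s) | x a s. x \<in> hom C (Suc n) \<and> (x \<in> ev C \<or> x \<in> od C) \<and>
     a \<in> hom C 1 \<and> (a \<in> ev C \<or> a \<in> od C) \<and> s \<in> S \<and> (s \<in> ev C \<or> s \<in> od C)}"
  have I: "Ind C n S = span G" unfolding Ind_def G_def ..
  have Sh: "S \<subseteq> hom C n" using lidealD(2)[OF S] .
  have Gh: "G \<subseteq> hom C (Suc n)" unfolding G_def using cmp_hom amg_hom1 Sh by blast
  have G'G: "G' \<subseteq> G" unfolding G'_def G_def by blast
  have L1: "cmp C x (amg C a s) \<in> span G'"
    if x: "x \<in> hom C (Suc n)" "x \<in> ev C \<or> x \<in> od C" and a: "a \<in> hom C 1" "a \<in> ev C \<or> a \<in> od C"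
      and s: "s \<in> S" for x a s
  proof -
    obtain s0 s1 where ss: "s0 \<in> S" "s0 \<in> ev C" "s1 \<in> S" "s1 \<in> od C" "s = s0 + s1"
      using gradedD[OF lidealD(3)[OF S] s] by metis
    have sh: "s0 \<in> hom C n" "s1 \<in> hom C n" using ss Sh by blast+
    have "amg C a s = amg C a s0 + amg C a s1" using amg_addr[OF a(1) sh] ss(5) by simp
    then have "cmp C x (amg C a s) = cmp C x (amg C a s0) + cmp C x (amg C a s1)"
      using distl[OF amg_hom1[OF a(1) sh(1)] amg_hom1[OF a(1) sh(2)] x(1)] by simp
    moreover have "cmp C x (amg C a s0) \<in> G'" unfolding G'_def using x a ss by blast
    moreover have "cmp C x (amg C a s1) \<in> G'" unfolding G'_def using x a ss by blast
    ultimately show ?thesis using span_add span_base by metis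
  qed
  have L2: "cmp C x (amg C a s) \<in> span G'"
    if x: "x \<in> hom C (Suc n)" "x \<in> ev C \<or> x \<in> od C" and a: "a \<in> hom C 1" and s: "s \<in> S" for x a s
  proof -
    obtain a0 a1 where aa: "a0 \<in> hom C 1" "a0 \<in> ev C" "a1 \<in> hom C 1" "a1 \<in> od C" "a = a0 + a1"
      using hom_split[OF a] by metis
    have sh: "s \<in> hom C n" using s Sh by blast
    have "amg C a s = amg C a0 s + amg C a1 s" using amg_addl[OF aa(1) aa(3) sh] aa(5) by simp
    then have "cmp C x (amg C a s) = cmp C x (amg C a0 s) + cmp C x (amg C a1 s)"
      using distl[OF amg_hom1[OF aa(1) sh] amg_hom1[OF aa(3) sh] x(1)] by simp
    then show ?thesis using L1[OF x aa(1) _ s] L1[OF x aa(3) _ s] aa span_add by metis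
  qed
  have L3: "cmp C x (amg C a s) \<in> span G'"
    if x: "x \<in> hom C (Suc n)" and a: "a \<in> hom C 1" and s: "s \<in> S" for x a s
  proof -
    obtain x0 x1 where xx: "x0 \<in> hom C (Suc n)" "x0 \<in> ev C" "x1 \<in> hom C (Suc n)" "x1 \<in> od C" "x = x0 + x1"
      using hom_split[OF x] by metis
    have sh: "s \<in> hom C n" using s Sh by blast
    have "cmp C x (amg C a s) = cmp C x0 (amg C a s) + cmp C x1 (amg C a s)"
      using distr[OF xx(1) xx(3) amg_hom1[OF a sh]] xx(5) by simp
    then show ?thesis using L2[OF xx(1) _ a s] L2[OF xx(3) _ a s] xx span_add by metis
  qed
  have GG': "G \<subseteq> span G'" unfolding G_def using L3 by blast
  have eq: "span G = span G'"
  proof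
    show "span G \<subseteq> span G'" using span_minimal[OF GG' subspace_span] .
    show "span G' \<subseteq> span G" using span_mono[OF G'G] .
  qed
  have hG': "\<forall>g\<in>G'. g \<in> ev C \<or> g \<in> od C"
  proof
    fix g assume "g \<in> G'"
    then obtain x a s where xas: "g = cmp C x (amg C a s)" "x \<in> hom C (Suc n)" "x \<in> ev C \<or> x \<in> od C"
      "a \<in> hom C 1" "a \<in> ev C \<or> a \<in> od C" "s \<in> S" "s \<in> ev C \<or> s \<in> od C"
      unfolding G'_def by blast
    have sh: "s \<in> hom C n" using xas Sh by blast
    have "amg C a s \<in> ev C \<or> amg C a s \<in> od C" using homog_amg[OF xas(4) sh xas(5) xas(7)] .
    then show "g \<in> ev C \<or> g \<in> od C" using homog_cmp[OF xas(2) amg_hom1[OF xas(4) sh] xas(3)] xas(1) by blast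
  qed
  have gr: "graded C (span G)" unfolding eq using graded_span_homog[OF hG'] .
  have lc: "\<forall>b\<in>hom C (Suc n). \<forall>y\<in>span G. cmp C b y \<in> span G"
  proof (intro ballI)
    fix b y assume b: "b \<in> hom C (Suc n)" and y: "y \<in> span G"
    have "\<forall>g\<in>G. cmp C b g \<in> span G"
    proof
      fix g assume "g \<in> G"
      then obtain x a s where xas: "g = cmp C x (amg C a s)" "x \<in> hom C (Suc n)" "a \<in> hom C 1" "s \<in> S"
        unfolding G_def by blast
      have sh: "s \<in> hom C n" using xas Sh by blast
      have "cmp C b g = cmp C (cmp C b x) (amg C a s)"
        using assoc[OF b xas(2) amg_hom1[OF xas(3) sh]] xas(1) by simp
      moreover have "cmp C b x \<in> hom C (Suc n)" using cmp_hom[OF b xas(2)] .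
      ultimately have "cmp C b g \<in> G" unfolding G_def using xas by blast
      then show "cmp C b g \<in> span G" using span_base by blast
    qed
    then show "cmp C b y \<in> span G" using span_lmul[OF Gh b _ subspace_span y] by blast
  qed
  show ?thesis unfolding I lideal_def using gr lc span_hom[OF Gh] by blast
qed


lemma main:
  fixes R :: "((nat \<times> 'a set set) \<times> (nat \<times> 'a set set)) set"
  assumes C4: "\<forall>m. \<forall>la'\<in>Lam C m. \<forall>S\<in>la'. \<forall>mu\<in>Lam C (Suc m).
               occurs mu (Ind C m S) \<longleftrightarrow> ((m, la'), (Suc m, mu)) \<in> R"
    and lam: "la \<in> Lam C n"
  shows "Sigma_id C n (Jlam C la) =
           span (\<Union>{Jlam C mu | mu. mu \<in> Lam C (Suc n) \<and> ((n, la), (Suc n, mu)) \<in> R})"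
proof -
  define U where "U = \<Union>{Jlam C mu | mu. mu \<in> Lam C (Suc n) \<and> ((n, la), (Suc n, mu)) \<in> R}"
  define M where "M = span U"
  define J where "J = Jlam C la"
  define F where "F = {I. tideal C (Suc n) I \<and> (\<lambda>j. amg C (idn C 1) j) ` J \<subseteq> I}"
  have Sig: "Sigma_id C n (Jlam C la) = \<Inter>F" unfolding Sigma_id_def F_def J_def ..
  obtain L0 where L0: "mlideal C n L0" "la = {L'. mlideal C n L' \<and> liso C n L0 L'}"
    using Lam_elem[OF lam] by metis
  have L0la: "L0 \<in> la" using L0 liso_refl by blast
  have Uh: "U \<subseteq> hom C (Suc n)" unfolding U_def using class_hom(2) by blast
  have JU: "Jlam C mu \<subseteq> U" if "mu \<in> Lam C (Suc n)" "((n, la), (Suc n, mu)) \<in> R" for mu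
    unfolding U_def using that by blast
  have UM: "U \<subseteq> M" unfolding M_def using span_superset .
  have lah: "\<Union>la \<subseteq> hom C n" using class_hom(1)[OF lam] .
  have Mt: "tideal C (Suc n) M"
  proof -
    have cl: "cmp C b y \<in> M \<and> cmp C y b \<in> M" if b: "b \<in> hom C (Suc n)" and y: "y \<in> U" for b y
    proof -
      obtain mu where mu: "mu \<in> Lam C (Suc n)" "((n, la), (Suc n, mu)) \<in> R" "y \<in> Jlam C mu"
        using y unfolding U_def by blast
      have Jm: "Jlam C mu \<subseteq> M" using JU[OF mu(1,2)] UM by blast
      have uh: "\<Union>mu \<subseteq> hom C (Suc n)" using class_hom(1)[OF mu(1)] .
      have l: "\<forall>z\<in>\<Union>mu. cmp C b z \<in> M"
      proof
        fix z assume "z \<in> \<Union>mu"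
        then obtain L' where L': "L' \<in> mu" "z \<in> L'" by blast
        obtain L1 where L1: "mlideal C (Suc n) L1" "mu = {L'. mlideal C (Suc n) L' \<and> liso C (Suc n) L1 L'}"
          using Lam_elem[OF mu(1)] by metis
        have "lideal C (Suc n) L'" using L' L1(2) mlideal_lideal by blast
        then have "cmp C b z \<in> L'" using lidealD(4) b L'(2) by blast
        then have "cmp C b z \<in> \<Union>mu" using L' by blast
        then have "cmp C b z \<in> Jlam C mu" unfolding Jlam_def using span_base by blast
        then show "cmp C b z \<in> M" using Jm by blast
      qed
      have r: "\<forall>z\<in>\<Union>mu. cmp C z b \<in> M"
      proof
        fix z assume "z \<in> \<Union>mu"
        then obtain L' where L': "L' \<in> mu" "z \<in> L'" by blast
        have "cmp C z b \<in> Jlam C mu" using class_rmul[OF mu(1) L'(1) b L'(2)] .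
        then show "cmp C z b \<in> M" using Jm by blast
      qed
      have yy: "y \<in> span (\<Union>mu)" using mu(3) unfolding Jlam_def .
      show ?thesis
        using span_lmul[OF uh b l _ yy] span_rmul[OF uh b r _ yy] unfolding M_def by blast
    qed
    show ?thesis unfolding tideal_def
    proof (intro conjI ballI)
      show "subspace M" unfolding M_def by simp
      show "M \<subseteq> hom C (Suc n)" unfolding M_def using span_hom[OF Uh] .
    next
      fix b x assume b: "b \<in> hom C (Suc n)" and x: "x \<in> M"
      have "\<forall>y\<in>U. cmp C b y \<in> M" "\<forall>y\<in>U. cmp C y b \<in> M" using cl[OF b] by blast+
      then show "cmp C b x \<in> M" "cmp C x b \<in> M"
        using span_lmul[OF Uh b _ _ x[unfolded M_def]] span_rmul[OF Uh b _ _ x[unfolded M_def]]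
        unfolding M_def by blast+
    qed
  qed
  have iM: "amg C (idn C 1) s \<in> M" if s: "s \<in> \<Union>la" for s
  proof -
    obtain S' where S': "S' \<in> la" "s \<in> S'" using s by blast
    have mS': "mlideal C n S'" using S'(1) L0(2) by blast
    have lS': "lideal C n S'" using mlideal_lideal[OF mS'] .
    have sh: "s \<in> hom C n" using S'(2) lidealD(2)[OF lS'] by blast
    have lI: "lideal C (Suc n) (Ind C n S')" using Ind_lideal[OF lS'] .
    have eq1: "amg C (idn C 1) s = cmp C (idn C (Suc n)) (amg C (idn C 1) s)"
      using idl[OF amg_hom1[OF idn_hom sh]] by simp
    have "cmp C (idn C (Suc n)) (amg C (idn C 1) s) \<in>
        {cmp C x (amg C a s) | x a s. x \<in> hom C (Suc n) \<and> a \<in> hom C 1 \<and> s \<in> S'}"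
      using idn_hom[of "Suc n"] idn_hom[of 1] S'(2) by blast
    then have "cmp C (idn C (Suc n)) (amg C (idn C 1) s) \<in> Ind C n S'" unfolding Ind_def by (rule span_base)
    then have "amg C (idn C 1) s \<in> Ind C n S'" using eq1 by simp
    then have "amg C (idn C 1) s \<in> span (\<Union>{L. mlideal C (Suc n) L \<and> L \<subseteq> Ind C n S'})"
      using decomp[OF lI] by blast
    moreover have "span (\<Union>{L. mlideal C (Suc n) L \<and> L \<subseteq> Ind C n S'}) \<subseteq> M"
    proof (rule span_minimal)
      show "subspace M" unfolding M_def by simp
      show "\<Union>{L. mlideal C (Suc n) L \<and> L \<subseteq> Ind C n S'} \<subseteq> M"
      proof
        fix z assume "z \<in> \<Union>{L. mlideal C (Suc n) L \<and> L \<subseteq> Ind C n S'}"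
        then obtain L where L: "mlideal C (Suc n) L" "L \<subseteq> Ind C n S'" "z \<in> L" by blast
        define mu where "mu = {L'. mlideal C (Suc n) L' \<and> liso C (Suc n) L L'}"
        have mu: "mu \<in> Lam C (Suc n)" unfolding mu_def Lam_def using L(1) by blast
        have Lmu: "L \<in> mu" unfolding mu_def using L(1) liso_refl by blast
        have "occurs mu (Ind C n S')" unfolding occurs_def using Lmu L(2) by blast
        then have rel: "((n, la), (Suc n, mu)) \<in> R" using C4 lam S'(1) mu by blast
        have "z \<in> \<Union>mu" using Lmu L(3) by blast
        then have "z \<in> Jlam C mu" unfolding Jlam_def using span_base by blast
        then show "z \<in> M" using JU[OF mu rel] UM by blast
      qed
    qed
    ultimately show ?thesis by blast
  qed
  have MF: "M \<in> F"
  proof -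
    have "(\<lambda>j. amg C (idn C 1) j) ` J \<subseteq> M"
    proof
      fix y assume "y \<in> (\<lambda>j. amg C (idn C 1) j) ` J"
      then obtain j where j: "j \<in> J" "y = amg C (idn C 1) j" by blast
      have "j \<in> span (\<Union>la)" using j(1) unfolding J_def Jlam_def .
      then have "amg C (idn C 1) j \<in> M"
        using span_amg[OF lah idn_hom[of 1] _ _] iM unfolding M_def by blast
      then show "y \<in> M" using j by simp
    qed
    then show ?thesis unfolding F_def using Mt by blast
  qed
  have FM: "M \<subseteq> I" if I: "I \<in> F" for I
  proof -
    have It: "tideal C (Suc n) I" and iI: "(\<lambda>j. amg C (idn C 1) j) ` J \<subseteq> I"
      using I unfolding F_def by blast+
    have sI: "subspace I" using tidealD(1)[OF It] .
    have IndI: "Ind C n L0 \<subseteq> I"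
      unfolding Ind_def
    proof (rule span_minimal[OF _ sI])
      show "{cmp C x (amg C a s) | x a s. x \<in> hom C (Suc n) \<and> a \<in> hom C 1 \<and> s \<in> L0} \<subseteq> I"
      proof
        fix g assume "g \<in> {cmp C x (amg C a s) | x a s. x \<in> hom C (Suc n) \<and> a \<in> hom C 1 \<and> s \<in> L0}"
        then obtain x a s where xas: "g = cmp C x (amg C a s)" "x \<in> hom C (Suc n)" "a \<in> hom C 1" "s \<in> L0"
          by blast
        have sh: "s \<in> hom C n" using xas(4) lidealD(2)[OF mlideal_lideal[OF L0(1)]] by blast
        have "s \<in> J" unfolding J_def Jlam_def using xas(4) L0la span_base by blast
        then have iS: "amg C (idn C 1) s \<in> I" using iI by blast
        have ah: "amg C a (idn C n) \<in> hom C (Suc n)" using amg_hom1[OF xas(3) idn_hom] .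
        have "amg C a s = cmp C (amg C a (idn C n)) (amg C (idn C 1) s)"
          using interchange_id[OF xas(3) sh] .
        then have "amg C a s \<in> I" using tidealD(3)[OF It ah iS] by simp
        then show "g \<in> I" using tidealD(3)[OF It xas(2)] xas(1) by simp
      qed
    qed
    have "U \<subseteq> I"
    proof
      fix y assume "y \<in> U"
      then obtain mu where mu: "mu \<in> Lam C (Suc n)" "((n, la), (Suc n, mu)) \<in> R" "y \<in> Jlam C mu"
        unfolding U_def by blast
      have "occurs mu (Ind C n L0)" using C4 lam L0la mu(1,2) by blast
      then obtain L where L: "L \<in> mu" "L \<subseteq> Ind C n L0" unfolding occurs_def by blast
      obtain L1 where L1: "mlideal C (Suc n) L1" "mu = {L'. mlideal C (Suc n) L' \<and> liso C (Suc n) L1 L'}"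
        using Lam_elem[OF mu(1)] by metis
      have lL: "lideal C (Suc n) L" using L(1) L1(2) mlideal_lideal by blast
      have lL1: "lideal C (Suc n) L1" using mlideal_lideal[OF L1(1)] .
      have "liso C (Suc n) L1 L" using L(1) L1(2) by blast
      then have "liso C (Suc n) L L1" using liso_sym[OF lL1] by blast
      moreover have "L \<subseteq> I" using L(2) IndI by blast
      ultimately have L1I: "L1 \<subseteq> I" using absorb[OF lL _ lidealD(2)[OF lL1] It] by blast
      have "\<Union>mu \<subseteq> I"
      proof
        fix z assume "z \<in> \<Union>mu"
        then obtain L' where L': "L' \<in> mu" "z \<in> L'" by blast
        have "liso C (Suc n) L1 L'" "mlideal C (Suc n) L'" using L' L1(2) by blast+
        then have "L' \<subseteq> I" using absorb[OF lL1 _ lidealD(2)[OF mlideal_lideal] It L1I] by blast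
        then show "z \<in> I" using L' by blast
      qed
      then have "Jlam C mu \<subseteq> I" unfolding Jlam_def using span_minimal[OF _ sI] by blast
      then show "y \<in> I" using mu(3) by blast
    qed
    then show ?thesis unfolding M_def using span_minimal[OF _ sI] by blast
  qed
  have "\<Inter>F = M"
  proof
    show "\<Inter>F \<subseteq> M" using MF by blast
    show "M \<subseteq> \<Inter>F" using FM by blast
  qed
  then show ?thesis using Sig unfolding M_def U_def by simp
qed

end

theorem lemma3p6:
  fixes C :: "('k::field, 'a::ab_group_add) msc"
    and R :: "((nat \<times> 'a set set) \<times> (nat \<times> 'a set set)) set"
    and n :: nat and la :: "'a set set"
  assumes C12: "mon_supercat C"
    and C3: "\<forall>m. findim C m \<and> semisimple C m"
    and C4_order: "partial_order_on (LamC C) R"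
    and C4: "\<forall>m. \<forall>la'\<in>Lam C m. \<forall>S\<in>la'. \<forall>mu\<in>Lam C (Suc m).
               occurs mu (Ind C m S) \<longleftrightarrow> ((m, la'), (Suc m, mu)) \<in> R"
    and lam: "la \<in> Lam C n"
  shows "Sigma_id C n (Jlam C la) =
           module.span (sc C) (\<Union>{Jlam C mu | mu. mu \<in> Lam C (Suc n) \<and> ((n, la), (Suc n, mu)) \<in> R})"
proof -
  interpret MSC C using C12 C3 by (unfold_locales) auto
  show ?thesis using main[OF C4 lam] .
qed

end
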